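(* Let $G$ be a finitely generated group of exponential growth with finite generating set $S_G$ and let $H\ne\{1\}$ be a finite group; equip $H\wr G$ with the word metric with respect to $(H\setminus\{1\})\cup S_G$. If $\mathrm{dim}_{AN}(G)\le n$, then for any $k\ge n$ the $k$-dimensional control function of $H\wr G$ is weakly equivalent to $t\mapsto 2^t$; that is, there is a $k$-dimensional control function of $H\wr G$ weakly dominated by $2^t$, and every $k$-dimensional control function of $H\wr G$ weakly dominates $2^t$.
   Context: Wreath product: $H\wr G$ is the set of pairs $(f,g)$, $f:G\to H$ finitely supported, with $(f_1,g_1)(f_2,g_2)=(f_1\cdot(g_1f_2),g_1g_2)$ where $(gf)(\gamma)=f(g^{-1}\gamma)$. Growth function $\gamma(r)=\#\{g:|g|_{S_G}<r\}$; exponential growth means $\gamma$ is weakly equivalent to $2^t$ (equivalently $\lim_r\gamma(r)^{1/r}>1$). For a metric space $X$, $r>0$: $r$-components of $Y\subseteq X$ are classes of points joined by sequences in $Y$ with consecutive distances $<r$. An $m$-dimensional control function of $X$ is $D:\mathbb{R}_+\to\mathbb{R}_+\cup\{\infty\}$ such that for each $r>0$ there is a cover $\{X_0,\dots,X_m\}$ of $X$ such that every open ball $B(x,r)$ lies in some $X_i$ and every $r$-component of each $X_i$ has diameter at most $D(r)$. $\mathrm{dim}_{AN}(X)$ is the smallest $m$ such that $X$ has an $m$-dimensional control function $D(r)=Cr$ with $C>0$. $f$ weakly dominates $g$ if there are $\lambda\ge1$, $C\ge0$ with $g(t)\le\lambda f(\lambda t+C)+C$ for all $t\ge0$; weakly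 equivalent means each weakly dominates the other. *)

theory Defs
  imports "HOL-Algebra.Group" "HOL-Algebra.Generated_Groups"
          "HOL-Library.Extended_Real" "HOL-Library.Extended_Nat"
begin

definition word_length :: "('g,'b) monoid_scheme \<Rightarrow> 'g set \<Rightarrow> 'g \<Rightarrow> nat" where
  "word_length G S g = (LEAST n. \<exists>xs. length xs = n \<and> set xs \<subseteq> S \<union> m_inv G ` S
      \<and> foldr (\<lambda>a b. a \<otimes>\<^bsub>G\<^esub> b) xs \<one>\<^bsub>G\<^esub> = g)"

definition word_dist :: "('g,'b) monoid_scheme \<Rightarrow> 'g set \<Rightarrow> 'g \<Rightarrow> 'g \<Rightarrow> real" where
  "word_dist G S x y = real (word_length G S (inv\<^bsub>G\<^esub> x \<otimes>\<^bsub>G\<^esub> y))"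

definition growth :: "('g,'b) monoid_scheme \<Rightarrow> 'g set \<Rightarrow> real \<Rightarrow> ereal" where
  "growth G S r = ereal (real (card {g \<in> carrier G. real (word_length G S g) < r}))"

definition weakly_dominates :: "(real \<Rightarrow> ereal) \<Rightarrow> (real \<Rightarrow> ereal) \<Rightarrow> bool" where
  "weakly_dominates f g \<longleftrightarrow> (\<exists>lam C. lam \<ge> 1 \<and> C \<ge> 0 \<and>
      (\<forall>t\<ge>0. g t \<le> ereal lam * f (lam * t + C) + ereal C))"

definition weakly_equivalent :: "(real \<Rightarrow> ereal) \<Rightarrow> (real \<Rightarrow> ereal) \<Rightarrow> bool" where
  "weakly_equivalent f g \<longleftrightarrow> weakly_dominates f g \<and> weakly_dominates g f"

definition exp_growth :: "('g,'b) monoid_scheme \<Rightarrow> 'g set \<Rightarrow> bool" where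
  "exp_growth G S \<longleftrightarrow> weakly_equivalent (growth G S) (\<lambda>t. ereal (2 powr t))"

definition r_step :: "'a set \<Rightarrow> ('a \<Rightarrow> 'a \<Rightarrow> real) \<Rightarrow> real \<Rightarrow> 'a \<Rightarrow> 'a \<Rightarrow> bool" where
  "r_step Y d r a b \<longleftrightarrow> a \<in> Y \<and> b \<in> Y \<and> d a b < r"

definition r_component :: "'a set \<Rightarrow> ('a \<Rightarrow> 'a \<Rightarrow> real) \<Rightarrow> real \<Rightarrow> 'a \<Rightarrow> 'a set" where
  "r_component Y d r x = {y. (r_step Y d r)\<^sup>*\<^sup>* x y}"

definition diam_e :: "('a \<Rightarrow> 'a \<Rightarrow> real) \<Rightarrow> 'a set \<Rightarrow> ereal" where
  "diam_e d C = Sup {ereal (d x y) | x y. x \<in> C \<and> y \<in> C}"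

definition control_function ::
    "'a set \<Rightarrow> ('a \<Rightarrow> 'a \<Rightarrow> real) \<Rightarrow> nat \<Rightarrow> (real \<Rightarrow> ereal) \<Rightarrow> bool" where
  "control_function X d m D \<longleftrightarrow> (\<forall>t\<ge>0. D t \<ge> 0) \<and>
     (\<forall>r>0. \<exists>U :: nat \<Rightarrow> 'a set.
        (\<forall>i\<le>m. U i \<subseteq> X) \<and> (\<Union>i\<le>m. U i) = X \<and>
        (\<forall>x\<in>X. \<exists>i\<le>m. {y \<in> X. d x y < r} \<subseteq> U i) \<and>
        (\<forall>i\<le>m. \<forall>x\<in>U i. diam_e d (r_component (U i) d r x) \<le> D r))"

definition has_linear_control :: "'a set \<Rightarrow> ('a \<Rightarrow> 'a \<Rightarrow> real) \<Rightarrow> nat \<Rightarrow> bool" where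
  "has_linear_control X d m \<longleftrightarrow> (\<exists>C>0. control_function X d m (\<lambda>r. ereal (C * r)))"

definition dim_AN :: "'a set \<Rightarrow> ('a \<Rightarrow> 'a \<Rightarrow> real) \<Rightarrow> enat" where
  "dim_AN X d = (if \<exists>m. has_linear_control X d m
                 then enat (LEAST m. has_linear_control X d m) else \<infinity>)"

definition wreath :: "('h,'a) monoid_scheme \<Rightarrow> ('g,'b) monoid_scheme \<Rightarrow> (('g \<Rightarrow> 'h) \<times> 'g) monoid" where
  "wreath H G = \<lparr>carrier = {(f, g). f \<in> extensional (carrier G) \<and> f ` carrier G \<subseteq> carrier H
        \<and> finite {x \<in> carrier G. f x \<noteq> \<one>\<^bsub>H\<^esub>} \<and> g \<in> carrier G},
     mult = (\<lambda>(f1, g1) (f2, g2). ((\<lambda>x\<in>carrier G. f1 x \<otimes>\<^bsub>H\<^esub> f2 (inv\<^bsub>G\<^esub> g1 \<otimes>\<^bsub>G\<^esub> x)),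
                                  g1 \<otimes>\<^bsub>G\<^esub> g2)),
     one = ((\<lambda>x\<in>carrier G. \<one>\<^bsub>H\<^esub>), \<one>\<^bsub>G\<^esub>)\<rparr>"

definition wreath_gens :: "('h,'a) monoid_scheme \<Rightarrow> ('g,'b) monoid_scheme \<Rightarrow> 'g set \<Rightarrow> (('g \<Rightarrow> 'h) \<times> 'g) set" where
  "wreath_gens H G S =
     {((\<lambda>x\<in>carrier G. if x = \<one>\<^bsub>G\<^esub> then h else \<one>\<^bsub>H\<^esub>), \<one>\<^bsub>G\<^esub>) | h. h \<in> carrier H - {\<one>\<^bsub>H\<^esub>}}
     \<union> {((\<lambda>x\<in>carrier G. \<one>\<^bsub>H\<^esub>), s) | s. s \<in> S}"

end

theory Submission
  imports Defs "HOL-Analysis.Brouwer_Fixpoint"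
begin

locale wgrp = group M for M (structure) +
  fixes S assumes S_sub: "S \<subseteq> carrier M"
begin

definition A :: "'a set" where "A = S \<union> m_inv M ` S"
definition ev :: "'a list \<Rightarrow> 'a" where "ev xs = foldr (\<lambda>a b. a \<otimes> b) xs \<one>"
definition reach :: "'a \<Rightarrow> bool" where "reach g \<longleftrightarrow> (\<exists>xs. set xs \<subseteq> A \<and> ev xs = g)"

abbreviation wl where "wl \<equiv> word_length M S"

lemma A_carrier: "A \<subseteq> carrier M"
  using S_sub by (auto simp: A_def)

lemma inv_A: "a \<in> A \<Longrightarrow> inv a \<in> A"
  using S_sub by (auto simp: A_def)

lemma ev_Nil[simp]: "ev [] = \<one>" by (simp add: ev_def)
lemma ev_Cons[simp]: "ev (a # xs) = a \<otimes> ev xs" by (simp add: ev_def)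

lemma ev_closed: "set xs \<subseteq> A \<Longrightarrow> ev xs \<in> carrier M"
  using A_carrier by (induction xs) auto

lemma ev_append: "set xs \<subseteq> A \<Longrightarrow> set ys \<subseteq> A \<Longrightarrow> ev (xs @ ys) = ev xs \<otimes> ev ys"
proof (induction xs)
  case Nil then show ?case using ev_closed by simp
next
  case (Cons a xs)
  then show ?case using A_carrier ev_closed by (simp add: m_assoc subset_iff)
qed

lemma ev_inv: "set xs \<subseteq> A \<Longrightarrow> ev (rev (map (m_inv M) xs)) = inv (ev xs)"
proof (induction xs)
  case Nil then show ?case by simp
next
  case (Cons a xs)
  have a: "a \<in> carrier M" using Cons A_carrier by auto
  have sA: "set (rev (map (m_inv M) xs)) \<subseteq> A" using Cons inv_A by auto
  have "ev (rev (map (m_inv M) (a # xs))) = ev (rev (map (m_inv M) xs)) \<otimes> ev [inv a]"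
    using ev_append[OF sA] inv_A Cons by simp
  also have "\<dots> = inv (ev xs) \<otimes> inv a" using Cons a by simp
  also have "\<dots> = inv (a \<otimes> ev xs)" using a ev_closed Cons by (simp add: inv_mult_group)
  finally show ?case by simp
qed

lemma wl_le: "set xs \<subseteq> A \<Longrightarrow> ev xs = g \<Longrightarrow> wl g \<le> length xs"
  unfolding word_length_def
  by (rule Least_le) (use A_def ev_def in auto)

lemma wl_ex: assumes "reach g" shows "\<exists>xs. set xs \<subseteq> A \<and> ev xs = g \<and> length xs = wl g"
proof -
  from assms obtain xs where "set xs \<subseteq> A" "ev xs = g" by (auto simp: reach_def)
  then have "\<exists>n xs. length xs = n \<and> set xs \<subseteq> S \<union> m_inv M ` S \<and> foldr (\<lambda>a b. a \<otimes> b) xs \<one> = g"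
    by (auto simp: A_def ev_def)
  from LeastI_ex[OF this] show ?thesis
    unfolding word_length_def A_def ev_def by metis
qed

lemma reach_carrier: "reach g \<Longrightarrow> g \<in> carrier M"
  using ev_closed by (auto simp: reach_def)

lemma reach_one: "reach \<one>"
  unfolding reach_def by (rule exI[of _ "[]"]) simp

lemma reach_A: "a \<in> A \<Longrightarrow> reach a"
  unfolding reach_def using A_carrier by (intro exI[of _ "[a]"]) auto

lemma reach_mult: "reach a \<Longrightarrow> reach b \<Longrightarrow> reach (a \<otimes> b)"
  unfolding reach_def by (metis ev_append le_sup_iff set_append)

lemma reach_inv: "reach a \<Longrightarrow> reach (inv a)"
  unfolding reach_def using ev_inv inv_A by (metis (no_types, lifting) image_subset_iff set_map set_rev subsetD)

lemma wl_mult: assumes "reach a" "reach b" shows "wl (a \<otimes> b) \<le> wl a + wl b"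
proof -
  obtain xs ys where "set xs \<subseteq> A" "ev xs = a" "length xs = wl a" "set ys \<subseteq> A" "ev ys = b" "length ys = wl b"
    using wl_ex assms by metis
  then show ?thesis using wl_le[of "xs @ ys"] ev_append by simp
qed

lemma wl_inv: assumes "reach a" shows "wl (inv a) \<le> wl a"
proof -
  obtain xs where "set xs \<subseteq> A" "ev xs = a" "length xs = wl a"
    using wl_ex assms by metis
  moreover have "set (rev (map (m_inv M) xs)) \<subseteq> A" using \<open>set xs \<subseteq> A\<close> inv_A by auto
  ultimately show ?thesis using wl_le[of "rev (map (m_inv M) xs)" "inv a"] ev_inv by simp
qed

lemma wl_inv_eq: assumes "reach a" shows "wl (inv a) = wl a"
  using wl_inv[OF assms] wl_inv[OF reach_inv[OF assms]] assms reach_carrier by simp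

lemma wl_one: "wl \<one> = 0"
  using wl_le[of "[]"] by simp

lemma wl_A: "a \<in> A \<Longrightarrow> wl a \<le> 1"
  using wl_le[of "[a]"] A_carrier by auto

lemma phi_le:
  fixes \<Phi> :: "'a \<Rightarrow> nat"
  assumes "\<Phi> \<one> = 0" "\<And>a b. a \<in> carrier M \<Longrightarrow> b \<in> carrier M \<Longrightarrow> \<Phi> (a \<otimes> b) \<le> \<Phi> a + \<Phi> b"
    "\<And>a. a \<in> A \<Longrightarrow> \<Phi> a \<le> 1" "reach g"
  shows "\<Phi> g \<le> wl g"
proof -
  have *: "set xs \<subseteq> A \<Longrightarrow> \<Phi> (ev xs) \<le> length xs" for xs
  proof (induction xs)
    case Nil then show ?case using assms by simp
  next
    case (Cons a xs)
    then have "\<Phi> (a \<otimes> ev xs) \<le> \<Phi> a + \<Phi> (ev xs)" using assms(2) A_carrier ev_closed by auto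
    moreover have "\<Phi> a \<le> 1" using Cons.prems assms(3) by simp
    moreover have "\<Phi> (ev xs) \<le> length xs" using Cons.IH Cons.prems by simp
    ultimately show ?case by simp
  qed
  obtain xs where "set xs \<subseteq> A" "ev xs = g" "length xs = wl g" using wl_ex assms(4) by metis
  then show ?thesis using * by metis
qed

lemma all_reach: assumes "generate M S = carrier M" "g \<in> carrier M" shows "reach g"
proof -
  have "g \<in> generate M S" using assms by simp
  then show ?thesis
  proof (induction rule: generate.induct)
    case one then show ?case by (rule reach_one)
  next
    case (incl h) then show ?case by (intro reach_A) (auto simp: A_def)
  next
    case (inv h) then show ?case by (intro reach_A) (auto simp: A_def)
  next
    case (eng h1 h2) then show ?case using reach_mult by blast
  qed
qed

lemma ball_finite_card:
  assumes "finite S"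
  shows "finite {g. reach g \<and> wl g \<le> n} \<and> card {g. reach g \<and> wl g \<le> n} \<le> (card A + 1) ^ n"
proof -
  have fA: "finite A" using assms by (simp add: A_def)
  have sub: "{g. reach g \<and> wl g \<le> n} \<subseteq> ev ` {xs. set xs \<subseteq> A \<and> length xs \<le> n}"
  proof
    fix g assume "g \<in> {g. reach g \<and> wl g \<le> n}"
    then obtain xs where "set xs \<subseteq> A" "ev xs = g" "length xs = wl g" "wl g \<le> n" using wl_ex by blast
    then show "g \<in> ev ` {xs. set xs \<subseteq> A \<and> length xs \<le> n}" by auto
  qed
  have fl: "finite {xs. set xs \<subseteq> A \<and> length xs \<le> n}"
    using finite_lists_length_le[OF fA] by simp
  have sumle: "(\<Sum>i\<le>m. c ^ i) \<le> (c + 1) ^ m" for c m :: nat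
  proof (induction m)
    case 0 then show ?case by simp
  next
    case (Suc m)
    have "(\<Sum>i\<le>Suc m. c ^ i) = 1 + (\<Sum>i\<le>m. c * c ^ i)"
      by (simp only: sum.atMost_Suc_shift power_Suc power_0)
    also have "\<dots> = 1 + c * (\<Sum>i\<le>m. c ^ i)" by (simp add: sum_distrib_left)
    finally have "(\<Sum>i\<le>Suc m. c ^ i) = 1 + c * (\<Sum>i\<le>m. c ^ i)" .
    also have "\<dots> \<le> 1 + c * (c + 1) ^ m" using Suc by simp
    also have "\<dots> \<le> (c+1) ^ m + c * (c+1)^m" by simp
    finally show ?case by simp
  qed
  have "card {g. reach g \<and> wl g \<le> n} \<le> card (ev ` {xs. set xs \<subseteq> A \<and> length xs \<le> n})"
    by (rule card_mono[OF finite_imageI[OF fl] sub])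
  also have "\<dots> \<le> card {xs. set xs \<subseteq> A \<and> length xs \<le> n}" by (rule card_image_le[OF fl])
  also have "\<dots> = (\<Sum>i\<le>n. card A ^ i)" by (rule card_lists_length_le[OF fA])
  also have "\<dots> \<le> (card A + 1) ^ n" by (rule sumle)
  finally show ?thesis using finite_subset[OF sub finite_imageI[OF fl]] by simp
qed

lemma dist_eq: "word_dist M S x y = real (wl (inv x \<otimes> y))"
  by (simp add: word_dist_def)

end

locale wr = G: group G + H: group H for G :: "'g monoid" and H :: "'h monoid"
begin

abbreviation W where "W \<equiv> wreath H G"

definition supp :: "('g \<Rightarrow> 'h) \<Rightarrow> 'g set" where
  "supp f = {x \<in> carrier G. f x \<noteq> \<one>\<^bsub>H\<^esub>}"

definition onef :: "'g \<Rightarrow> 'h" where "onef = (\<lambda>x\<in>carrier G. \<one>\<^bsub>H\<^esub>)"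

lemma carrier_W: "(f, g) \<in> carrier W \<longleftrightarrow> f \<in> extensional (carrier G) \<and> f ` carrier G \<subseteq> carrier H
        \<and> finite (supp f) \<and> g \<in> carrier G"
  by (simp add: wreath_def supp_def)

lemma mult_W: "(f1, g1) \<otimes>\<^bsub>W\<^esub> (f2, g2) =
   ((\<lambda>x\<in>carrier G. f1 x \<otimes>\<^bsub>H\<^esub> f2 (inv\<^bsub>G\<^esub> g1 \<otimes>\<^bsub>G\<^esub> x)), g1 \<otimes>\<^bsub>G\<^esub> g2)"
  by (simp add: wreath_def)

lemma one_W: "\<one>\<^bsub>W\<^esub> = (onef, \<one>\<^bsub>G\<^esub>)"
  by (simp add: wreath_def onef_def)

lemma supp_mult_sub:
  assumes "g1 \<in> carrier G"
  shows "supp (\<lambda>x\<in>carrier G. f1 x \<otimes>\<^bsub>H\<^esub> f2 (inv\<^bsub>G\<^esub> g1 \<otimes>\<^bsub>G\<^esub> x)) \<subseteq> supp f1 \<union> (\<lambda>y. g1 \<otimes>\<^bsub>G\<^esub> y) ` supp f2"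
proof
  fix x assume x: "x \<in> supp (\<lambda>x\<in>carrier G. f1 x \<otimes>\<^bsub>H\<^esub> f2 (inv\<^bsub>G\<^esub> g1 \<otimes>\<^bsub>G\<^esub> x))"
  then have xc: "x \<in> carrier G" and ne: "f1 x \<otimes>\<^bsub>H\<^esub> f2 (inv\<^bsub>G\<^esub> g1 \<otimes>\<^bsub>G\<^esub> x) \<noteq> \<one>\<^bsub>H\<^esub>"
    by (auto simp: supp_def)
  show "x \<in> supp f1 \<union> (\<lambda>y. g1 \<otimes>\<^bsub>G\<^esub> y) ` supp f2"
  proof (cases "f1 x = \<one>\<^bsub>H\<^esub>")
    case True
    then have "f2 (inv\<^bsub>G\<^esub> g1 \<otimes>\<^bsub>G\<^esub> x) \<noteq> \<one>\<^bsub>H\<^esub>" using ne by auto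
    moreover have "x = g1 \<otimes>\<^bsub>G\<^esub> (inv\<^bsub>G\<^esub> g1 \<otimes>\<^bsub>G\<^esub> x)" using xc assms by (simp add: G.m_assoc[symmetric])
    ultimately show ?thesis using xc assms by (auto simp: supp_def)
  next
    case False then show ?thesis using xc by (auto simp: supp_def)
  qed
qed

lemma mult_closed_W:
  assumes "a \<in> carrier W" "b \<in> carrier W" shows "a \<otimes>\<^bsub>W\<^esub> b \<in> carrier W"
proof -
  obtain f1 g1 f2 g2 where ab: "a = (f1, g1)" "b = (f2, g2)" by fastforce
  have c: "f1 \<in> extensional (carrier G)" "f1 ` carrier G \<subseteq> carrier H" "finite (supp f1)" "g1 \<in> carrier G"
    "f2 \<in> extensional (carrier G)" "f2 ` carrier G \<subseteq> carrier H" "finite (supp f2)" "g2 \<in> carrier G"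
    using assms ab carrier_W by auto
  have "finite (supp (\<lambda>x\<in>carrier G. f1 x \<otimes>\<^bsub>H\<^esub> f2 (inv\<^bsub>G\<^esub> g1 \<otimes>\<^bsub>G\<^esub> x)))"
    using supp_mult_sub[OF c(4)] c by (meson finite_UnI finite_imageI finite_subset)
  then show ?thesis using c unfolding ab mult_W carrier_W by (auto simp: image_subset_iff)
qed

lemma group_W: "group W"
proof (rule groupI)
  show "x \<otimes>\<^bsub>W\<^esub> y \<in> carrier W" if "x \<in> carrier W" "y \<in> carrier W" for x y
    using mult_closed_W that by blast
  show "\<one>\<^bsub>W\<^esub> \<in> carrier W" unfolding one_W carrier_W by (auto simp: onef_def supp_def)
next
  fix x y z assume xyz: "x \<in> carrier W" "y \<in> carrier W" "z \<in> carrier W"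
  obtain f1 g1 f2 g2 f3 g3 where e: "x = (f1, g1)" "y = (f2, g2)" "z = (f3, g3)" by (metis surj_pair)
  have c: "f1 ` carrier G \<subseteq> carrier H" "g1 \<in> carrier G"
    "f2 ` carrier G \<subseteq> carrier H" "g2 \<in> carrier G" "f3 ` carrier G \<subseteq> carrier H" "g3 \<in> carrier G"
    using xyz e carrier_W by auto
  show "x \<otimes>\<^bsub>W\<^esub> y \<otimes>\<^bsub>W\<^esub> z = x \<otimes>\<^bsub>W\<^esub> (y \<otimes>\<^bsub>W\<^esub> z)"
    unfolding e mult_W
  proof (simp, intro conjI ext)
    fix u
    show "(\<lambda>x\<in>carrier G. (if x \<in> carrier G then f1 x \<otimes>\<^bsub>H\<^esub> f2 (inv\<^bsub>G\<^esub> g1 \<otimes>\<^bsub>G\<^esub> x) else undefined) \<otimes>\<^bsub>H\<^esub>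
          f3 (inv\<^bsub>G\<^esub> (g1 \<otimes>\<^bsub>G\<^esub> g2) \<otimes>\<^bsub>G\<^esub> x)) u =
         (\<lambda>x\<in>carrier G. f1 x \<otimes>\<^bsub>H\<^esub>
          (if inv\<^bsub>G\<^esub> g1 \<otimes>\<^bsub>G\<^esub> x \<in> carrier G then f2 (inv\<^bsub>G\<^esub> g1 \<otimes>\<^bsub>G\<^esub> x) \<otimes>\<^bsub>H\<^esub> f3 (inv\<^bsub>G\<^esub> g2 \<otimes>\<^bsub>G\<^esub> (inv\<^bsub>G\<^esub> g1 \<otimes>\<^bsub>G\<^esub> x))
           else undefined)) u"
      using c by (auto simp: H.m_assoc G.inv_mult_group G.m_assoc image_subset_iff)
    show "g1 \<otimes>\<^bsub>G\<^esub> g2 \<otimes>\<^bsub>G\<^esub> g3 = g1 \<otimes>\<^bsub>G\<^esub> (g2 \<otimes>\<^bsub>G\<^esub> g3)" using c by (simp add: G.m_assoc)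
  qed
next
  fix x assume x: "x \<in> carrier W"
  obtain f g where e: "x = (f, g)" by fastforce
  have c: "f \<in> extensional (carrier G)" "f ` carrier G \<subseteq> carrier H" "finite (supp f)" "g \<in> carrier G"
    using x e carrier_W by auto
  show "\<one>\<^bsub>W\<^esub> \<otimes>\<^bsub>W\<^esub> x = x"
    unfolding e one_W mult_W onef_def using c
    by (auto simp: image_subset_iff extensional_def intro!: ext)
  let ?y = "((\<lambda>u\<in>carrier G. inv\<^bsub>H\<^esub> f (g \<otimes>\<^bsub>G\<^esub> u)), inv\<^bsub>G\<^esub> g)"
  have "supp (\<lambda>u\<in>carrier G. inv\<^bsub>H\<^esub> f (g \<otimes>\<^bsub>G\<^esub> u)) \<subseteq> (\<lambda>y. inv\<^bsub>G\<^esub> g \<otimes>\<^bsub>G\<^esub> y) ` supp f"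
  proof
    fix u assume "u \<in> supp (\<lambda>u\<in>carrier G. inv\<^bsub>H\<^esub> f (g \<otimes>\<^bsub>G\<^esub> u))"
    then have u: "u \<in> carrier G" "inv\<^bsub>H\<^esub> f (g \<otimes>\<^bsub>G\<^esub> u) \<noteq> \<one>\<^bsub>H\<^esub>" by (auto simp: supp_def)
    then have "f (g \<otimes>\<^bsub>G\<^esub> u) \<noteq> \<one>\<^bsub>H\<^esub>" by auto
    moreover have "u = inv\<^bsub>G\<^esub> g \<otimes>\<^bsub>G\<^esub> (g \<otimes>\<^bsub>G\<^esub> u)" using u c by (simp add: G.m_assoc[symmetric])
    ultimately show "u \<in> (\<lambda>y. inv\<^bsub>G\<^esub> g \<otimes>\<^bsub>G\<^esub> y) ` supp f" using u c by (auto simp: supp_def)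
  qed
  then have "finite (supp (\<lambda>u\<in>carrier G. inv\<^bsub>H\<^esub> f (g \<otimes>\<^bsub>G\<^esub> u)))" using c finite_subset by blast
  then have yc: "?y \<in> carrier W" unfolding carrier_W using c by (auto simp: image_subset_iff)
  have "?y \<otimes>\<^bsub>W\<^esub> x = \<one>\<^bsub>W\<^esub>"
    unfolding e one_W mult_W onef_def using c
    by (auto simp: image_subset_iff intro!: ext)
  then show "\<exists>y\<in>carrier W. y \<otimes>\<^bsub>W\<^esub> x = \<one>\<^bsub>W\<^esub>" using yc by blast
qed


interpretation WG: group W by (rule group_W)

lemma inv_W:
  assumes "(f, g) \<in> carrier W"
  shows "inv\<^bsub>W\<^esub> (f, g) = ((\<lambda>u\<in>carrier G. inv\<^bsub>H\<^esub> f (g \<otimes>\<^bsub>G\<^esub> u)), inv\<^bsub>G\<^esub> g)"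
proof -
  have c: "f \<in> extensional (carrier G)" "f ` carrier G \<subseteq> carrier H" "finite (supp f)" "g \<in> carrier G"
    using assms carrier_W by auto
  let ?y = "((\<lambda>u\<in>carrier G. inv\<^bsub>H\<^esub> f (g \<otimes>\<^bsub>G\<^esub> u)), inv\<^bsub>G\<^esub> g)"
  have "supp (\<lambda>u\<in>carrier G. inv\<^bsub>H\<^esub> f (g \<otimes>\<^bsub>G\<^esub> u)) \<subseteq> (\<lambda>y. inv\<^bsub>G\<^esub> g \<otimes>\<^bsub>G\<^esub> y) ` supp f"
  proof
    fix u assume "u \<in> supp (\<lambda>u\<in>carrier G. inv\<^bsub>H\<^esub> f (g \<otimes>\<^bsub>G\<^esub> u))"
    then have u: "u \<in> carrier G" "inv\<^bsub>H\<^esub> f (g \<otimes>\<^bsub>G\<^esub> u) \<noteq> \<one>\<^bsub>H\<^esub>" by (auto simp: supp_def)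
    then have "f (g \<otimes>\<^bsub>G\<^esub> u) \<noteq> \<one>\<^bsub>H\<^esub>" by auto
    moreover have "u = inv\<^bsub>G\<^esub> g \<otimes>\<^bsub>G\<^esub> (g \<otimes>\<^bsub>G\<^esub> u)" using u c by (simp add: G.m_assoc[symmetric])
    ultimately show "u \<in> (\<lambda>y. inv\<^bsub>G\<^esub> g \<otimes>\<^bsub>G\<^esub> y) ` supp f" using u c by (auto simp: supp_def)
  qed
  then have "finite (supp (\<lambda>u\<in>carrier G. inv\<^bsub>H\<^esub> f (g \<otimes>\<^bsub>G\<^esub> u)))" using c finite_subset by blast
  then have yc: "?y \<in> carrier W" unfolding carrier_W using c by (auto simp: image_subset_iff)
  have "?y \<otimes>\<^bsub>W\<^esub> (f, g) = \<one>\<^bsub>W\<^esub>"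
    unfolding one_W mult_W onef_def using c
    by (auto simp: image_subset_iff intro!: ext)
  then show ?thesis using WG.inv_equality yc assms by blast
qed

lemma div_W:
  assumes "(f1, g1) \<in> carrier W" "(f2, g2) \<in> carrier W"
  shows "inv\<^bsub>W\<^esub> (f1, g1) \<otimes>\<^bsub>W\<^esub> (f2, g2) =
     ((\<lambda>u\<in>carrier G. inv\<^bsub>H\<^esub> f1 (g1 \<otimes>\<^bsub>G\<^esub> u) \<otimes>\<^bsub>H\<^esub> f2 (g1 \<otimes>\<^bsub>G\<^esub> u)), inv\<^bsub>G\<^esub> g1 \<otimes>\<^bsub>G\<^esub> g2)"
  using assms unfolding inv_W[OF assms(1)] mult_W by (auto simp: carrier_W intro!: ext)

definition lampf :: "'g \<Rightarrow> 'h \<Rightarrow> 'g \<Rightarrow> 'h" where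
  "lampf x h = (\<lambda>y\<in>carrier G. if y = x then h else \<one>\<^bsub>H\<^esub>)"

definition psi :: "'g \<Rightarrow> ('g \<Rightarrow> 'h) \<times> 'g" where "psi g = (onef, g)"

lemma psi_carrier: "g \<in> carrier G \<Longrightarrow> psi g \<in> carrier W"
  by (auto simp: psi_def carrier_W onef_def supp_def)

lemma psi_mult: "a \<in> carrier G \<Longrightarrow> b \<in> carrier G \<Longrightarrow> psi a \<otimes>\<^bsub>W\<^esub> psi b = psi (a \<otimes>\<^bsub>G\<^esub> b)"
  by (auto simp: psi_def mult_W onef_def intro!: ext)

lemma psi_one: "psi \<one>\<^bsub>G\<^esub> = \<one>\<^bsub>W\<^esub>"
  by (simp add: psi_def one_W)

lemma psi_inv: "a \<in> carrier G \<Longrightarrow> inv\<^bsub>W\<^esub> (psi a) = psi (inv\<^bsub>G\<^esub> a)"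
  using psi_carrier[of a] unfolding psi_def by (auto simp: inv_W onef_def intro!: ext)

lemma lampf_carrier: "x \<in> carrier G \<Longrightarrow> h \<in> carrier H \<Longrightarrow> (lampf x h, \<one>\<^bsub>G\<^esub>) \<in> carrier W"
proof -
  assume a: "x \<in> carrier G" "h \<in> carrier H"
  have "supp (lampf x h) \<subseteq> {x}" by (auto simp: supp_def lampf_def)
  then have "finite (supp (lampf x h))" using finite_subset by blast
  then show ?thesis using a by (auto simp: carrier_W lampf_def)
qed

lemma inv_lamp1: "h \<in> carrier H \<Longrightarrow> inv\<^bsub>W\<^esub> (lampf \<one>\<^bsub>G\<^esub> h, \<one>\<^bsub>G\<^esub>) = (lampf \<one>\<^bsub>G\<^esub> (inv\<^bsub>H\<^esub> h), \<one>\<^bsub>G\<^esub>)"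
  using lampf_carrier[of "\<one>\<^bsub>G\<^esub>" h] by (auto simp: inv_W lampf_def intro!: ext)

lemma lamp_conj:
  assumes "x \<in> carrier G" "h \<in> carrier H"
  shows "psi x \<otimes>\<^bsub>W\<^esub> (lampf \<one>\<^bsub>G\<^esub> h, \<one>\<^bsub>G\<^esub>) \<otimes>\<^bsub>W\<^esub> psi (inv\<^bsub>G\<^esub> x) = (lampf x h, \<one>\<^bsub>G\<^esub>)"
proof -
  have "\<And>y. y \<in> carrier G \<Longrightarrow> (inv\<^bsub>G\<^esub> x \<otimes>\<^bsub>G\<^esub> y = \<one>\<^bsub>G\<^esub>) = (y = x)"
    using assms by (metis G.inv_closed G.inv_inv G.l_inv G.r_inv G.inv_equality)
  then show ?thesis using assms
    by (auto simp: psi_def mult_W onef_def lampf_def intro!: ext)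
qed

lemma mult_lamp:
  assumes "(f, \<one>\<^bsub>G\<^esub>) \<in> carrier W" "x \<in> carrier G" "h \<in> carrier H"
  shows "(f, \<one>\<^bsub>G\<^esub>) \<otimes>\<^bsub>W\<^esub> (lampf x h, \<one>\<^bsub>G\<^esub>) =
     ((\<lambda>y\<in>carrier G. if y = x then f x \<otimes>\<^bsub>H\<^esub> h else f y), \<one>\<^bsub>G\<^esub>)"
  using assms by (auto simp: mult_W lampf_def carrier_W image_subset_iff intro!: ext)

lemma mult_psi:
  assumes "(f, \<one>\<^bsub>G\<^esub>) \<in> carrier W" "g \<in> carrier G"
  shows "(f, \<one>\<^bsub>G\<^esub>) \<otimes>\<^bsub>W\<^esub> psi g = (f, g)"
  using assms by (auto simp: mult_W psi_def onef_def carrier_W image_subset_iff extensional_def intro!: ext)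

end

locale wrS = wr G H for G :: "'g monoid" and H :: "'h monoid" +
  fixes S assumes S_sub: "S \<subseteq> carrier G" and S_gen: "generate G S = carrier G" and S_fin: "finite S"
begin

abbreviation gens where "gens \<equiv> wreath_gens H G S"

lemma gens_eq: "gens = {(lampf \<one>\<^bsub>G\<^esub> h, \<one>\<^bsub>G\<^esub>) | h. h \<in> carrier H - {\<one>\<^bsub>H\<^esub>}} \<union> {psi s | s. s \<in> S}"
  by (simp add: wreath_gens_def lampf_def psi_def onef_def)

lemma gens_sub: "gens \<subseteq> carrier W"
  using lampf_carrier psi_carrier S_sub unfolding gens_eq by blast

sublocale GG: wgrp G S by unfold_locales (rule S_sub)
sublocale WW: wgrp W gens by (rule wgrp.intro[OF group_W]) (unfold_locales, rule gens_sub)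

lemma WA_gens: "b \<in> gens \<Longrightarrow> b \<in> WW.A" by (simp add: WW.A_def)
lemma WA_inv: "b \<in> gens \<Longrightarrow> inv\<^bsub>W\<^esub> b \<in> WW.A" by (simp add: WW.A_def)
lemma lamp_gen: "h \<in> carrier H \<Longrightarrow> h \<noteq> \<one>\<^bsub>H\<^esub> \<Longrightarrow> (lampf \<one>\<^bsub>G\<^esub> h, \<one>\<^bsub>G\<^esub>) \<in> gens"
  unfolding gens_eq by blast
lemma psi_gen: "s \<in> S \<Longrightarrow> psi s \<in> gens"
  unfolding gens_eq by blast

lemma WA_cases:
  assumes "a \<in> WW.A"
  shows "(\<exists>h\<in>carrier H. a = (lampf \<one>\<^bsub>G\<^esub> h, \<one>\<^bsub>G\<^esub>)) \<or> (\<exists>s\<in>GG.A. a = psi s)"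
proof -
  have "a \<in> gens \<or> a \<in> m_inv W ` gens" using assms by (simp add: WW.A_def)
  then show ?thesis
  proof
    assume "a \<in> gens" then show ?thesis unfolding gens_eq GG.A_def by blast
  next
    assume "a \<in> m_inv W ` gens"
    then obtain b where b: "b \<in> gens" "a = inv\<^bsub>W\<^esub> b" by blast
    then consider (l) h where "h \<in> carrier H" "b = (lampf \<one>\<^bsub>G\<^esub> h, \<one>\<^bsub>G\<^esub>)" | (p) s where "s \<in> S" "b = psi s"
      unfolding gens_eq by blast
    then show ?thesis
    proof cases
      case l then show ?thesis using b inv_lamp1 by auto
    next
      case p
      then have "a = psi (inv\<^bsub>G\<^esub> s)" using b psi_inv S_sub by auto
      moreover have "inv\<^bsub>G\<^esub> s \<in> GG.A" using p by (auto simp: GG.A_def)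
      ultimately show ?thesis by blast
    qed
  qed
qed

lemma psi_word:
  assumes "set xs \<subseteq> GG.A"
  shows "set (map psi xs) \<subseteq> WW.A \<and> WW.ev (map psi xs) = psi (GG.ev xs)"
  using assms
proof (induction xs)
  case Nil then show ?case by (simp add: psi_one)
next
  case (Cons a xs)
  have a: "a \<in> GG.A" using Cons by simp
  have "psi a \<in> WW.A"
  proof -
    have "a \<in> S \<or> (\<exists>s\<in>S. a = inv\<^bsub>G\<^esub> s)" using a by (auto simp: GG.A_def)
    then show ?thesis
    proof
      assume "a \<in> S" then show ?thesis using WA_gens psi_gen by blast
    next
      assume "\<exists>s\<in>S. a = inv\<^bsub>G\<^esub> s"
      then obtain s where "s \<in> S" "a = inv\<^bsub>G\<^esub> s" by blast
      then have "psi a = inv\<^bsub>W\<^esub> (psi s)" using psi_inv S_sub by auto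
      moreover have "psi s \<in> gens" using \<open>s \<in> S\<close> unfolding gens_eq by blast
      ultimately show ?thesis using WA_inv by simp
    qed
  qed
  moreover have "psi a \<otimes>\<^bsub>W\<^esub> psi (GG.ev xs) = psi (a \<otimes>\<^bsub>G\<^esub> GG.ev xs)"
    using psi_mult a GG.A_carrier GG.ev_closed Cons by auto
  ultimately show ?case using Cons by simp
qed

lemma G_reach: "g \<in> carrier G \<Longrightarrow> GG.reach g"
  using GG.all_reach[OF S_gen] by blast

lemma psi_reach_wl: assumes "g \<in> carrier G" shows "WW.reach (psi g) \<and> WW.wl (psi g) \<le> GG.wl g"
proof -
  obtain xs where "set xs \<subseteq> GG.A" "GG.ev xs = g" "length xs = GG.wl g"
    using GG.wl_ex G_reach assms by blast
  then show ?thesis using psi_word[of xs] WW.wl_le[of "map psi xs"] unfolding WW.reach_def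
    by (metis length_map)
qed

lemma lamp_reach_wl:
  assumes "x \<in> carrier G" "h \<in> carrier H"
  shows "WW.reach (lampf x h, \<one>\<^bsub>G\<^esub>) \<and> WW.wl (lampf x h, \<one>\<^bsub>G\<^esub>) \<le> 2 * GG.wl x + 1"
proof (cases "h = \<one>\<^bsub>H\<^esub>")
  case True
  then have "(lampf x h, \<one>\<^bsub>G\<^esub>) = \<one>\<^bsub>W\<^esub>" by (auto simp: lampf_def one_W onef_def)
  then show ?thesis using WW.reach_one WW.wl_one by simp
next
  case False
  have l1: "(lampf \<one>\<^bsub>G\<^esub> h, \<one>\<^bsub>G\<^esub>) \<in> WW.A" using False assms WA_gens lamp_gen by blast
  have r1: "WW.reach (lampf \<one>\<^bsub>G\<^esub> h, \<one>\<^bsub>G\<^esub>)" and w1: "WW.wl (lampf \<one>\<^bsub>G\<^esub> h, \<one>\<^bsub>G\<^esub>) \<le> 1"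
    using WW.reach_A[OF l1] WW.wl_A[OF l1] by auto
  have ix: "inv\<^bsub>G\<^esub> x \<in> carrier G" using assms by simp
  note p1 = psi_reach_wl[OF assms(1)] and p2 = psi_reach_wl[OF ix]
  have winv: "GG.wl (inv\<^bsub>G\<^esub> x) \<le> GG.wl x" using GG.wl_inv G_reach assms by blast
  have e: "(lampf x h, \<one>\<^bsub>G\<^esub>) = psi x \<otimes>\<^bsub>W\<^esub> (lampf \<one>\<^bsub>G\<^esub> h, \<one>\<^bsub>G\<^esub>) \<otimes>\<^bsub>W\<^esub> psi (inv\<^bsub>G\<^esub> x)"
    using lamp_conj assms by simp
  have rr: "WW.reach (psi x \<otimes>\<^bsub>W\<^esub> (lampf \<one>\<^bsub>G\<^esub> h, \<one>\<^bsub>G\<^esub>))" using WW.reach_mult p1 r1 by blast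
  have "WW.wl (lampf x h, \<one>\<^bsub>G\<^esub>) \<le> WW.wl (psi x \<otimes>\<^bsub>W\<^esub> (lampf \<one>\<^bsub>G\<^esub> h, \<one>\<^bsub>G\<^esub>)) + WW.wl (psi (inv\<^bsub>G\<^esub> x))"
    unfolding e using WW.wl_mult rr p2 by blast
  also have "\<dots> \<le> WW.wl (psi x) + WW.wl (lampf \<one>\<^bsub>G\<^esub> h, \<one>\<^bsub>G\<^esub>) + WW.wl (psi (inv\<^bsub>G\<^esub> x))"
    using WW.wl_mult p1 r1 by simp
  also have "\<dots> \<le> 2 * GG.wl x + 1" using p1 p2 w1 winv by simp
  finally show ?thesis using e WW.reach_mult rr p2 by auto
qed

lemma config_bound:
  fixes B :: real
  shows "(\<phi>, \<one>\<^bsub>G\<^esub>) \<in> carrier W \<Longrightarrow> card (supp \<phi>) = n \<Longrightarrow> (\<forall>u\<in>supp \<phi>. real (GG.wl u) \<le> B) \<Longrightarrow>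
    WW.reach (\<phi>, \<one>\<^bsub>G\<^esub>) \<and> real (WW.wl (\<phi>, \<one>\<^bsub>G\<^esub>)) \<le> real n * (2 * B + 1)"
proof (induction n arbitrary: \<phi>)
  case 0
  have c: "\<phi> \<in> extensional (carrier G)" "finite (supp \<phi>)" using 0 carrier_W by auto
  then have "supp \<phi> = {}" using 0 by simp
  then have "\<phi> = onef" using c by (auto simp: supp_def onef_def extensional_def intro!: ext)
  then have "(\<phi>, \<one>\<^bsub>G\<^esub>) = \<one>\<^bsub>W\<^esub>" by (simp add: one_W)
  then show ?case using WW.reach_one WW.wl_one by simp
next
  case (Suc n)
  have c: "\<phi> \<in> extensional (carrier G)" "\<phi> ` carrier G \<subseteq> carrier H" "finite (supp \<phi>)"
    using Suc.prems carrier_W by auto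
  obtain x where x: "x \<in> supp \<phi>" using Suc.prems by fastforce
  have xc: "x \<in> carrier G" and hx: "\<phi> x \<in> carrier H" using x c by (auto simp: supp_def)
  define \<phi>' where "\<phi>' = (\<lambda>y\<in>carrier G. if y = x then \<one>\<^bsub>H\<^esub> else \<phi> y)"
  have s': "supp \<phi>' = supp \<phi> - {x}" by (auto simp: supp_def \<phi>'_def)
  have c': "(\<phi>', \<one>\<^bsub>G\<^esub>) \<in> carrier W" using c s' by (auto simp: carrier_W \<phi>'_def)
  have n': "card (supp \<phi>') = n" using s' Suc.prems x c by simp
  have IH: "WW.reach (\<phi>', \<one>\<^bsub>G\<^esub>) \<and> real (WW.wl (\<phi>', \<one>\<^bsub>G\<^esub>)) \<le> real n * (2 * B + 1)"
    using Suc.IH[OF c' n'] Suc.prems s' by auto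
  have e: "(\<phi>', \<one>\<^bsub>G\<^esub>) \<otimes>\<^bsub>W\<^esub> (lampf x (\<phi> x), \<one>\<^bsub>G\<^esub>) = (\<phi>, \<one>\<^bsub>G\<^esub>)"
    using mult_lamp[OF c' xc hx] hx c by (auto simp: \<phi>'_def extensional_def intro!: ext)
  note L = lamp_reach_wl[OF xc hx]
  have "WW.wl (\<phi>, \<one>\<^bsub>G\<^esub>) \<le> WW.wl (\<phi>', \<one>\<^bsub>G\<^esub>) + WW.wl (lampf x (\<phi> x), \<one>\<^bsub>G\<^esub>)"
    using WW.wl_mult IH L e by metis
  then have "real (WW.wl (\<phi>, \<one>\<^bsub>G\<^esub>)) \<le> real (WW.wl (\<phi>', \<one>\<^bsub>G\<^esub>)) + (2 * real (GG.wl x) + 1)"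
    using L by linarith
  moreover have "real (GG.wl x) \<le> B" using Suc.prems x by auto
  ultimately have "real (WW.wl (\<phi>, \<one>\<^bsub>G\<^esub>)) \<le> real (Suc n) * (2 * B + 1)" using IH by (simp add: algebra_simps)
  then show ?case using WW.reach_mult IH L e by metis
qed

lemma W_reach: assumes "w \<in> carrier W" shows "WW.reach w"
proof -
  obtain f g where e: "w = (f, g)" by fastforce
  have c: "(f, \<one>\<^bsub>G\<^esub>) \<in> carrier W" "g \<in> carrier G" using assms e by (auto simp: carrier_W)
  have fs: "finite (supp f)" using c by (simp add: carrier_W)
  have "\<forall>u\<in>supp f. real (GG.wl u) \<le> (\<Sum>v\<in>supp f. real (GG.wl v))"
    using member_le_sum[OF _ _ fs] by (metis of_nat_0_le_iff)
  then have "WW.reach (f, \<one>\<^bsub>G\<^esub>)" using config_bound[OF c(1) refl] by blast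
  then show ?thesis using WW.reach_mult psi_reach_wl[OF c(2)] mult_psi[OF c] e by metis
qed

end

context wrS
begin

abbreviation dG where "dG \<equiv> word_dist G S"
abbreviation dW where "dW \<equiv> word_dist W gens"

lemma dG_tri: "x \<in> carrier G \<Longrightarrow> y \<in> carrier G \<Longrightarrow> z \<in> carrier G \<Longrightarrow> dG x z \<le> dG x y + dG y z"
proof -
  assume c: "x \<in> carrier G" "y \<in> carrier G" "z \<in> carrier G"
  have "inv\<^bsub>G\<^esub> x \<otimes>\<^bsub>G\<^esub> z = (inv\<^bsub>G\<^esub> x \<otimes>\<^bsub>G\<^esub> y) \<otimes>\<^bsub>G\<^esub> (inv\<^bsub>G\<^esub> y \<otimes>\<^bsub>G\<^esub> z)"
    using c by (simp add: G.m_assoc[symmetric]) (simp add: G.m_assoc)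
  then have "GG.wl (inv\<^bsub>G\<^esub> x \<otimes>\<^bsub>G\<^esub> z) \<le> GG.wl (inv\<^bsub>G\<^esub> x \<otimes>\<^bsub>G\<^esub> y) + GG.wl (inv\<^bsub>G\<^esub> y \<otimes>\<^bsub>G\<^esub> z)"
    using GG.wl_mult G_reach c by simp
  then show ?thesis by (simp add: word_dist_def)
qed

lemma dG_sym: "x \<in> carrier G \<Longrightarrow> y \<in> carrier G \<Longrightarrow> dG x y = dG y x"
proof -
  assume c: "x \<in> carrier G" "y \<in> carrier G"
  have "inv\<^bsub>G\<^esub> (inv\<^bsub>G\<^esub> x \<otimes>\<^bsub>G\<^esub> y) = inv\<^bsub>G\<^esub> y \<otimes>\<^bsub>G\<^esub> x" using c by (simp add: G.inv_mult_group)
  then show ?thesis using GG.wl_inv_eq[of "inv\<^bsub>G\<^esub> x \<otimes>\<^bsub>G\<^esub> y"] G_reach c by (simp add: word_dist_def)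
qed

lemma dW_tri: "x \<in> carrier W \<Longrightarrow> y \<in> carrier W \<Longrightarrow> z \<in> carrier W \<Longrightarrow> dW x z \<le> dW x y + dW y z"
proof -
  assume c: "x \<in> carrier W" "y \<in> carrier W" "z \<in> carrier W"
  have "inv\<^bsub>W\<^esub> x \<otimes>\<^bsub>W\<^esub> z = (inv\<^bsub>W\<^esub> x \<otimes>\<^bsub>W\<^esub> y) \<otimes>\<^bsub>W\<^esub> (inv\<^bsub>W\<^esub> y \<otimes>\<^bsub>W\<^esub> z)"
    using c by (simp add: WW.m_assoc[symmetric]) (simp add: WW.m_assoc)
  then have "WW.wl (inv\<^bsub>W\<^esub> x \<otimes>\<^bsub>W\<^esub> z) \<le> WW.wl (inv\<^bsub>W\<^esub> x \<otimes>\<^bsub>W\<^esub> y) + WW.wl (inv\<^bsub>W\<^esub> y \<otimes>\<^bsub>W\<^esub> z)"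
    using WW.wl_mult W_reach c by simp
  then show ?thesis by (simp add: word_dist_def)
qed

lemma dW_sym: "x \<in> carrier W \<Longrightarrow> y \<in> carrier W \<Longrightarrow> dW x y = dW y x"
proof -
  assume c: "x \<in> carrier W" "y \<in> carrier W"
  have "inv\<^bsub>W\<^esub> (inv\<^bsub>W\<^esub> x \<otimes>\<^bsub>W\<^esub> y) = inv\<^bsub>W\<^esub> y \<otimes>\<^bsub>W\<^esub> x" using c by (simp add: WW.inv_mult_group)
  then show ?thesis using WW.wl_inv_eq[of "inv\<^bsub>W\<^esub> x \<otimes>\<^bsub>W\<^esub> y"] W_reach c by (simp add: word_dist_def)
qed

lemma WA_snd: "a \<in> WW.A \<Longrightarrow> GG.wl (snd a) \<le> 1"
  using WA_cases[of a] GG.wl_one GG.wl_A by (auto simp: psi_def)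

lemma WA_supp: "a \<in> WW.A \<Longrightarrow> supp (fst a) \<subseteq> {\<one>\<^bsub>G\<^esub>}"
  using WA_cases[of a] by (auto simp: psi_def supp_def lampf_def onef_def split: if_splits)

lemma fst_mult: "fst (a \<otimes>\<^bsub>W\<^esub> b) = (\<lambda>x\<in>carrier G. fst a x \<otimes>\<^bsub>H\<^esub> fst b (inv\<^bsub>G\<^esub> snd a \<otimes>\<^bsub>G\<^esub> x))"
  by (cases a, cases b) (simp add: mult_W)

lemma snd_mult: "snd (a \<otimes>\<^bsub>W\<^esub> b) = snd a \<otimes>\<^bsub>G\<^esub> snd b"
  by (cases a, cases b) (simp add: mult_W)

lemma supp_fin: "w \<in> carrier W \<Longrightarrow> finite (supp (fst w))"
  by (cases w) (simp add: carrier_W)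

lemma snd_carrier: "w \<in> carrier W \<Longrightarrow> snd w \<in> carrier G"
  by (cases w) (simp add: carrier_W)

lemma supp_mult: "a \<in> carrier W \<Longrightarrow> supp (fst (a \<otimes>\<^bsub>W\<^esub> b)) \<subseteq> supp (fst a) \<union> (\<lambda>y. snd a \<otimes>\<^bsub>G\<^esub> y) ` supp (fst b)"
  unfolding fst_mult using supp_mult_sub snd_carrier by blast

lemma proj_le: assumes w: "w \<in> carrier W" shows "GG.wl (snd w) \<le> WW.wl w"
proof -
  have h1: "GG.wl (snd \<one>\<^bsub>W\<^esub>) = 0" by (simp add: one_W GG.wl_one)
  have h2: "GG.wl (snd (a \<otimes>\<^bsub>W\<^esub> b)) \<le> GG.wl (snd a) + GG.wl (snd b)" if "a \<in> carrier W" "b \<in> carrier W" for a b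
    unfolding snd_mult using GG.wl_mult G_reach snd_carrier that by blast
  have h3: "GG.wl (snd a) \<le> 1" if "a \<in> WW.A" for a using WA_snd that by blast
  show ?thesis using WW.phi_le[of "\<lambda>w. GG.wl (snd w)", OF h1 h2 h3 W_reach[OF w]] by simp
qed

lemma card_supp_le: assumes w: "w \<in> carrier W" shows "card (supp (fst w)) \<le> WW.wl w"
proof -
  have h1: "card (supp (fst \<one>\<^bsub>W\<^esub>)) = 0" by (simp add: one_W supp_def onef_def)
  have h2: "card (supp (fst (a \<otimes>\<^bsub>W\<^esub> b))) \<le> card (supp (fst a)) + card (supp (fst b))"
    if "a \<in> carrier W" "b \<in> carrier W" for a b
  proof -
    have f: "finite (supp (fst a))" "finite (supp (fst b))" using supp_fin that by auto
    have "card (supp (fst (a \<otimes>\<^bsub>W\<^esub> b))) \<le> card (supp (fst a) \<union> (\<lambda>y. snd a \<otimes>\<^bsub>G\<^esub> y) ` supp (fst b))"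
      by (rule card_mono) (use f supp_mult that in auto)
    also have "\<dots> \<le> card (supp (fst a)) + card ((\<lambda>y. snd a \<otimes>\<^bsub>G\<^esub> y) ` supp (fst b))" by (rule card_Un_le)
    also have "\<dots> \<le> card (supp (fst a)) + card (supp (fst b))" using card_image_le f by auto
    finally show ?thesis .
  qed
  have h3: "card (supp (fst a)) \<le> 1" if "a \<in> WW.A" for a
  proof -
    have "card (supp (fst a)) \<le> card {\<one>\<^bsub>G\<^esub>}" using WA_supp[OF that] by (intro card_mono) auto
    then show ?thesis by simp
  qed
  show ?thesis using WW.phi_le[of "\<lambda>w. card (supp (fst w))", OF h1 h2 h3 W_reach[OF w]] by simp
qed

definition Mx :: "('g \<Rightarrow> 'h) \<times> 'g \<Rightarrow> nat" where
  "Mx w = Max (insert 0 ((\<lambda>u. Suc (GG.wl u)) ` supp (fst w)))"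

lemma Mx_ge: "w \<in> carrier W \<Longrightarrow> u \<in> supp (fst w) \<Longrightarrow> Suc (GG.wl u) \<le> Mx w"
  unfolding Mx_def using supp_fin by (intro Max_ge) auto

lemma Mx_le: "w \<in> carrier W \<Longrightarrow> (\<And>u. u \<in> supp (fst w) \<Longrightarrow> Suc (GG.wl u) \<le> k) \<Longrightarrow> Mx w \<le> k"
  unfolding Mx_def using supp_fin by (subst Max_le_iff) auto

lemma loc_le: assumes w: "w \<in> carrier W" shows "max (GG.wl (snd w)) (Mx w) \<le> WW.wl w"
proof -
  have h1: "max (GG.wl (snd \<one>\<^bsub>W\<^esub>)) (Mx \<one>\<^bsub>W\<^esub>) = 0" by (simp add: one_W GG.wl_one Mx_def supp_def onef_def)
  have h2: "max (GG.wl (snd (a \<otimes>\<^bsub>W\<^esub> b))) (Mx (a \<otimes>\<^bsub>W\<^esub> b)) \<le> max (GG.wl (snd a)) (Mx a) + max (GG.wl (snd b)) (Mx b)"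
    if ab: "a \<in> carrier W" "b \<in> carrier W" for a b
  proof -
    have c: "snd a \<in> carrier G" "snd b \<in> carrier G" using snd_carrier ab by auto
    have s: "GG.wl (snd (a \<otimes>\<^bsub>W\<^esub> b)) \<le> GG.wl (snd a) + GG.wl (snd b)"
      unfolding snd_mult using GG.wl_mult G_reach c by blast
    have "Mx (a \<otimes>\<^bsub>W\<^esub> b) \<le> max (GG.wl (snd a)) (Mx a) + max (GG.wl (snd b)) (Mx b)"
    proof (rule Mx_le)
      show "a \<otimes>\<^bsub>W\<^esub> b \<in> carrier W" using ab by simp
      fix u assume "u \<in> supp (fst (a \<otimes>\<^bsub>W\<^esub> b))"
      then have "u \<in> supp (fst a) \<or> (\<exists>v\<in>supp (fst b). u = snd a \<otimes>\<^bsub>G\<^esub> v)" using supp_mult ab by blast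
      then show "Suc (GG.wl u) \<le> max (GG.wl (snd a)) (Mx a) + max (GG.wl (snd b)) (Mx b)"
      proof
        assume "u \<in> supp (fst a)" then show ?thesis using Mx_ge ab by fastforce
      next
        assume "\<exists>v\<in>supp (fst b). u = snd a \<otimes>\<^bsub>G\<^esub> v"
        then obtain v where v: "v \<in> supp (fst b)" "u = snd a \<otimes>\<^bsub>G\<^esub> v" by blast
        have vc: "v \<in> carrier G" using v by (simp add: supp_def)
        have "GG.wl u \<le> GG.wl (snd a) + GG.wl v" using v GG.wl_mult G_reach c vc by blast
        moreover have "Suc (GG.wl v) \<le> Mx b" using Mx_ge ab v by blast
        ultimately show ?thesis by linarith
      qed
    qed
    then show ?thesis using s by linarith
  qed
  have h3: "max (GG.wl (snd a)) (Mx a) \<le> 1" if "a \<in> WW.A" for a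
  proof -
    have ac: "a \<in> carrier W" using that WW.A_carrier by blast
    have "Mx a \<le> 1" using Mx_le[OF ac] WA_supp[OF that] GG.wl_one by fastforce
    then show ?thesis using WA_snd that by simp
  qed
  show ?thesis using WW.phi_le[of "\<lambda>w. max (GG.wl (snd w)) (Mx w)", OF h1 h2 h3 W_reach[OF w]] by simp
qed

lemma delta_img:
  assumes "(f1, g1) \<in> carrier W" "(f2, g2) \<in> carrier W"
  shows "supp (\<lambda>u\<in>carrier G. inv\<^bsub>H\<^esub> f1 (g1 \<otimes>\<^bsub>G\<^esub> u) \<otimes>\<^bsub>H\<^esub> f2 (g1 \<otimes>\<^bsub>G\<^esub> u))
     = (\<lambda>u. inv\<^bsub>G\<^esub> g1 \<otimes>\<^bsub>G\<^esub> u) ` {u \<in> carrier G. f1 u \<noteq> f2 u}"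
proof -
  have c: "f1 ` carrier G \<subseteq> carrier H" "f2 ` carrier G \<subseteq> carrier H" "g1 \<in> carrier G"
    using assms by (auto simp: carrier_W)
  have eq: "x \<in> carrier H \<Longrightarrow> y \<in> carrier H \<Longrightarrow> (inv\<^bsub>H\<^esub> x \<otimes>\<^bsub>H\<^esub> y = \<one>\<^bsub>H\<^esub>) = (x = y)" for x y
    by (metis H.inv_closed H.inv_equality H.inv_inv H.r_inv)
  show ?thesis
  proof (intro equalityI subsetI)
    fix v assume "v \<in> supp (\<lambda>u\<in>carrier G. inv\<^bsub>H\<^esub> f1 (g1 \<otimes>\<^bsub>G\<^esub> u) \<otimes>\<^bsub>H\<^esub> f2 (g1 \<otimes>\<^bsub>G\<^esub> u))"
    then have v: "v \<in> carrier G" "inv\<^bsub>H\<^esub> f1 (g1 \<otimes>\<^bsub>G\<^esub> v) \<otimes>\<^bsub>H\<^esub> f2 (g1 \<otimes>\<^bsub>G\<^esub> v) \<noteq> \<one>\<^bsub>H\<^esub>" by (auto simp: supp_def)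
    moreover have "f2 (g1 \<otimes>\<^bsub>G\<^esub> v) \<in> carrier H" using c v by auto
    ultimately have "f1 (g1 \<otimes>\<^bsub>G\<^esub> v) \<noteq> f2 (g1 \<otimes>\<^bsub>G\<^esub> v)" by auto
    moreover have "v = inv\<^bsub>G\<^esub> g1 \<otimes>\<^bsub>G\<^esub> (g1 \<otimes>\<^bsub>G\<^esub> v)" using c v by (simp add: G.m_assoc[symmetric])
    ultimately show "v \<in> (\<lambda>u. inv\<^bsub>G\<^esub> g1 \<otimes>\<^bsub>G\<^esub> u) ` {u \<in> carrier G. f1 u \<noteq> f2 u}" using c v by blast
  next
    fix v assume "v \<in> (\<lambda>u. inv\<^bsub>G\<^esub> g1 \<otimes>\<^bsub>G\<^esub> u) ` {u \<in> carrier G. f1 u \<noteq> f2 u}"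
    then obtain u where u: "u \<in> carrier G" "f1 u \<noteq> f2 u" "v = inv\<^bsub>G\<^esub> g1 \<otimes>\<^bsub>G\<^esub> u" by blast
    have "g1 \<otimes>\<^bsub>G\<^esub> v = u" using u c by (simp add: G.m_assoc[symmetric])
    then show "v \<in> supp (\<lambda>u\<in>carrier G. inv\<^bsub>H\<^esub> f1 (g1 \<otimes>\<^bsub>G\<^esub> u) \<otimes>\<^bsub>H\<^esub> f2 (g1 \<otimes>\<^bsub>G\<^esub> u))"
      using u c eq[of "f1 u" "f2 u"] by (auto simp: supp_def image_subset_iff)
  qed
qed

lemma M1: "a \<in> carrier W \<Longrightarrow> b \<in> carrier W \<Longrightarrow> dG (snd a) (snd b) \<le> dW a b"
proof -
  assume ab: "a \<in> carrier W" "b \<in> carrier W"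
  obtain f1 g1 f2 g2 where e: "a = (f1, g1)" "b = (f2, g2)" by fastforce
  have "snd (inv\<^bsub>W\<^esub> a \<otimes>\<^bsub>W\<^esub> b) = inv\<^bsub>G\<^esub> g1 \<otimes>\<^bsub>G\<^esub> g2" using div_W ab e by simp
  then show ?thesis using proj_le[of "inv\<^bsub>W\<^esub> a \<otimes>\<^bsub>W\<^esub> b"] ab e by (simp add: word_dist_def)
qed

lemma M2: "a \<in> carrier W \<Longrightarrow> b \<in> carrier W \<Longrightarrow> u \<in> carrier G \<Longrightarrow> fst a u \<noteq> fst b u \<Longrightarrow> dG (snd a) u < dW a b"
proof -
  assume ab: "a \<in> carrier W" "b \<in> carrier W" and u: "u \<in> carrier G" "fst a u \<noteq> fst b u"
  obtain f1 g1 f2 g2 where e: "a = (f1, g1)" "b = (f2, g2)" by fastforce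
  have g1: "g1 \<in> carrier G" using ab e by (simp add: carrier_W)
  let ?w = "inv\<^bsub>W\<^esub> a \<otimes>\<^bsub>W\<^esub> b"
  have "inv\<^bsub>G\<^esub> g1 \<otimes>\<^bsub>G\<^esub> u \<in> supp (fst ?w)" using div_W delta_img ab e u by auto
  moreover have wc: "?w \<in> carrier W" using ab by simp
  ultimately have "Suc (GG.wl (inv\<^bsub>G\<^esub> g1 \<otimes>\<^bsub>G\<^esub> u)) \<le> Mx ?w" using Mx_ge by blast
  then have "Suc (GG.wl (inv\<^bsub>G\<^esub> g1 \<otimes>\<^bsub>G\<^esub> u)) \<le> WW.wl ?w" using loc_le[OF wc] by linarith
  then show ?thesis using e by (simp add: word_dist_def)
qed

lemma M3: "a \<in> carrier W \<Longrightarrow> b \<in> carrier W \<Longrightarrow> card {u \<in> carrier G. fst a u \<noteq> fst b u} \<le> dW a b"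
proof -
  assume ab: "a \<in> carrier W" "b \<in> carrier W"
  obtain f1 g1 f2 g2 where e: "a = (f1, g1)" "b = (f2, g2)" by fastforce
  have g1: "g1 \<in> carrier G" using ab e by (simp add: carrier_W)
  let ?w = "inv\<^bsub>W\<^esub> a \<otimes>\<^bsub>W\<^esub> b"
  have inj: "inj_on (\<lambda>u. inv\<^bsub>G\<^esub> g1 \<otimes>\<^bsub>G\<^esub> u) {u \<in> carrier G. f1 u \<noteq> f2 u}"
    using g1 by (auto simp: inj_on_def)
  have "supp (fst ?w) = (\<lambda>u. inv\<^bsub>G\<^esub> g1 \<otimes>\<^bsub>G\<^esub> u) ` {u \<in> carrier G. f1 u \<noteq> f2 u}"
    using div_W delta_img ab e by auto
  then have "card (supp (fst ?w)) = card {u \<in> carrier G. f1 u \<noteq> f2 u}" using card_image[OF inj] by simp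
  then show ?thesis using card_supp_le[of ?w] ab e by (simp add: word_dist_def)
qed

lemma M4:
  assumes ab: "a \<in> carrier W" "b \<in> carrier W"
    and B: "\<And>u. u \<in> carrier G \<Longrightarrow> fst a u \<noteq> fst b u \<Longrightarrow> dG (snd a) u \<le> B"
  shows "dW a b \<le> real (card {u \<in> carrier G. fst a u \<noteq> fst b u}) * (2 * B + 1) + dG (snd a) (snd b)"
proof -
  obtain f1 g1 f2 g2 where e: "a = (f1, g1)" "b = (f2, g2)" by fastforce
  have g: "g1 \<in> carrier G" "g2 \<in> carrier G" using ab e by (auto simp: carrier_W)
  let ?\<phi> = "\<lambda>u\<in>carrier G. inv\<^bsub>H\<^esub> f1 (g1 \<otimes>\<^bsub>G\<^esub> u) \<otimes>\<^bsub>H\<^esub> f2 (g1 \<otimes>\<^bsub>G\<^esub> u)"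
  let ?g = "inv\<^bsub>G\<^esub> g1 \<otimes>\<^bsub>G\<^esub> g2"
  have w: "inv\<^bsub>W\<^esub> a \<otimes>\<^bsub>W\<^esub> b = (?\<phi>, ?g)" using div_W ab e by simp
  have wc: "(?\<phi>, ?g) \<in> carrier W" using w ab by (metis WW.inv_closed WW.m_closed)
  have pc: "(?\<phi>, \<one>\<^bsub>G\<^esub>) \<in> carrier W" using wc by (simp add: carrier_W)
  have gc: "?g \<in> carrier G" using g by simp
  have inj: "inj_on (\<lambda>u. inv\<^bsub>G\<^esub> g1 \<otimes>\<^bsub>G\<^esub> u) {u \<in> carrier G. f1 u \<noteq> f2 u}"
    using g by (auto simp: inj_on_def)
  have si: "supp ?\<phi> = (\<lambda>u. inv\<^bsub>G\<^esub> g1 \<otimes>\<^bsub>G\<^esub> u) ` {u \<in> carrier G. f1 u \<noteq> f2 u}"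
    using delta_img ab e by simp
  have cs: "card (supp ?\<phi>) = card {u \<in> carrier G. f1 u \<noteq> f2 u}" using si card_image[OF inj] by simp
  have "\<forall>v\<in>supp ?\<phi>. real (GG.wl v) \<le> B"
  proof
    fix v assume "v \<in> supp ?\<phi>"
    then obtain u where "u \<in> carrier G" "f1 u \<noteq> f2 u" "v = inv\<^bsub>G\<^esub> g1 \<otimes>\<^bsub>G\<^esub> u" using si by blast
    then show "real (GG.wl v) \<le> B" using B[of u] e by (simp add: word_dist_def)
  qed
  note cb = config_bound[OF pc cs this]
  note pr = psi_reach_wl[OF gc]
  have "WW.wl ((?\<phi>, \<one>\<^bsub>G\<^esub>) \<otimes>\<^bsub>W\<^esub> psi ?g) \<le> WW.wl (?\<phi>, \<one>\<^bsub>G\<^esub>) + WW.wl (psi ?g)"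
    using WW.wl_mult cb pr by blast
  then have "WW.wl (?\<phi>, ?g) \<le> WW.wl (?\<phi>, \<one>\<^bsub>G\<^esub>) + WW.wl (psi ?g)"
    unfolding mult_psi[OF pc gc] .
  then have "real (WW.wl (?\<phi>, ?g)) \<le> real (card {u \<in> carrier G. f1 u \<noteq> f2 u}) * (2 * B + 1) + real (GG.wl ?g)"
    using cb pr by linarith
  moreover have "dW a b = real (WW.wl (?\<phi>, ?g))" unfolding word_dist_def w ..
  moreover have "dG (snd a) (snd b) = real (GG.wl ?g)" unfolding word_dist_def e by simp
  ultimately have X: "dW a b \<le> real (card {u \<in> carrier G. f1 u \<noteq> f2 u}) * (2 * B + 1) + dG (snd a) (snd b)"
    by linarith
  have seteq: "{u \<in> carrier G. fst a u \<noteq> fst b u} = {u \<in> carrier G. f1 u \<noteq> f2 u}" using e by simp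
  show ?thesis unfolding seteq by (rule X)
qed

end

lemma x_le_2powr: fixes x :: real shows "x \<le> 2 powr x"
proof (cases "x \<le> 0")
  case True then show ?thesis by (smt (verit) powr_gt_zero)
next
  case False
  define n where "n = nat \<lceil>x\<rceil>"
  have n1: "n \<ge> 1" using False n_def by linarith
  have xn: "x \<le> real n" using n_def by linarith
  have xn2: "real n - 1 < x" using n_def False by linarith
  have "n \<le> 2 ^ (n - 1)" using n1
  proof (induction n rule: nat_induct_at_least)
    case base then show ?case by simp
  next
    case (Suc m) then show ?case
      by (metis Suc_diff_le diff_Suc_1 mult_2 power_Suc add_mono one_le_power one_le_numeral plus_1_eq_Suc)
  qed
  then have "real n \<le> 2 powr (real (n - 1))" by (simp add: powr_realpow)
  also have "\<dots> \<le> 2 powr x" using xn2 n1 by (intro powr_mono) auto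
  finally show ?thesis using xn by linarith
qed

lemma num_bound:
  fixes c r :: real and b :: nat
  assumes "c > 0" "r \<ge> 0" "b \<ge> 1"
  shows "real b ^ nat \<lfloor>(2*c+1) * r\<rfloor> * (2 * ((2*c+1) * r) + 1) + c * r
     \<le> 2 powr (((real b + 2) * (2*c+1) + c + 2) * r + ((real b + 2) * (2*c+1) + c + 2))"
proof -
  define \<rho> where "\<rho> = (2*c+1) * r"
  define n where "n = nat \<lfloor>\<rho>\<rfloor>"
  have rho0: "\<rho> \<ge> 0" using assms by (simp add: \<rho>_def)
  have nr: "real n \<le> \<rho>" using rho0 n_def by linarith
  have bb: "real b \<le> 2 powr real b" by (rule x_le_2powr)
  have "real b ^ n \<le> (2 powr real b) ^ n" using bb by (intro power_mono) auto
  also have "\<dots> = 2 powr (real b * real n)" by (simp add: powr_realpow[symmetric] powr_powr)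
  also have "\<dots> \<le> 2 powr (real b * \<rho>)" using nr by (intro powr_mono mult_left_mono) auto
  finally have t1: "real b ^ n \<le> 2 powr (real b * \<rho>)" .
  have t2: "2 * \<rho> + 1 \<le> 2 powr (2 * \<rho> + 1)" by (rule x_le_2powr)
  have t3: "c * r \<le> 2 powr (c * r)" by (rule x_le_2powr)
  define E where "E = (real b + 2) * \<rho> + 1 + c * r"
  have "real b ^ n * (2 * \<rho> + 1) \<le> 2 powr (real b * \<rho>) * 2 powr (2 * \<rho> + 1)"
    using t1 t2 rho0 by (intro mult_mono) auto
  also have "\<dots> = 2 powr (real b * \<rho> + (2 * \<rho> + 1))" by (simp add: powr_add)
  also have "\<dots> \<le> 2 powr E" unfolding E_def using assms by (intro powr_mono) (auto simp: algebra_simps)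
  finally have s1: "real b ^ n * (2 * \<rho> + 1) \<le> 2 powr E" .
  have s2: "c * r \<le> 2 powr E" using t3 unfolding E_def using assms rho0
    by (smt (verit) powr_mono one_le_numeral mult_nonneg_nonneg of_nat_0_le_iff)
  have "real b ^ n * (2 * \<rho> + 1) + c * r \<le> 2 * 2 powr E" using s1 s2 by linarith
  also have "\<dots> = 2 powr (E + 1)" by (simp add: powr_add)
  also have "\<dots> \<le> 2 powr (((real b + 2) * (2*c+1) + c + 2) * r + ((real b + 2) * (2*c+1) + c + 2))"
    unfolding E_def \<rho>_def using assms by (intro powr_mono) (auto simp: algebra_simps)
  finally show ?thesis unfolding n_def \<rho>_def .
qed

lemma rc_self: "x \<in> r_component Y d r x"
  by (simp add: r_component_def)

lemma rc_sub: "x \<in> Y \<Longrightarrow> r_component Y d r x \<subseteq> Y"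
proof
  fix y assume "x \<in> Y" "y \<in> r_component Y d r x"
  then have "(r_step Y d r)\<^sup>*\<^sup>* x y" by (simp add: r_component_def)
  then show "y \<in> Y" using \<open>x \<in> Y\<close> by (induction rule: rtranclp_induct) (auto simp: r_step_def)
qed

lemma diam_le: "x \<in> C \<Longrightarrow> y \<in> C \<Longrightarrow> diam_e d C \<le> ereal B \<Longrightarrow> d x y \<le> B"
proof -
  assume a: "x \<in> C" "y \<in> C" "diam_e d C \<le> ereal B"
  have "ereal (d x y) \<le> diam_e d C" unfolding diam_e_def using a by (intro Sup_upper) blast
  then have "ereal (d x y) \<le> ereal B" using a(3) by (rule order_trans)
  then show ?thesis by simp
qed

lemma diam_bound: "(\<And>x y. x \<in> C \<Longrightarrow> y \<in> C \<Longrightarrow> ereal (d x y) \<le> B) \<Longrightarrow> diam_e d C \<le> B"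
  unfolding diam_e_def by (intro Sup_least) blast

context wrS
begin

lemma comp_claim:
  assumes V: "V \<subseteq> carrier G" and w: "w \<in> carrier W" "snd w \<in> V"
    and st: "(r_step {y \<in> carrier W. snd y \<in> V} dW r)\<^sup>*\<^sup>* w y"
  shows "y \<in> carrier W \<and> snd y \<in> r_component V dG r (snd w) \<and>
    (\<forall>u\<in>carrier G. fst y u \<noteq> fst w u \<longrightarrow> (\<exists>g'\<in>r_component V dG r (snd w). dG g' u < r))"
  using st
proof (induction rule: rtranclp_induct)
  case base then show ?case using w by (simp add: rc_self)
next
  case (step y z)
  have yz: "y \<in> carrier W" "z \<in> carrier W" "snd y \<in> V" "snd z \<in> V" "dW y z < r"
    using step.hyps(2) by (auto simp: r_step_def)
  have "dG (snd y) (snd z) < r" using M1[OF yz(1,2)] yz(5) by linarith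
  then have "r_step V dG r (snd y) (snd z)" using yz by (simp add: r_step_def)
  then have zc: "snd z \<in> r_component V dG r (snd w)"
    using step.IH by (auto simp: r_component_def intro: rtranclp.rtrancl_into_rtrancl)
  have "\<exists>g'\<in>r_component V dG r (snd w). dG g' u < r" if u: "u \<in> carrier G" "fst z u \<noteq> fst w u" for u
  proof (cases "fst y u = fst w u")
    case True
    then have "fst y u \<noteq> fst z u" using u by simp
    then have "dG (snd y) u < r" using M2[OF yz(1,2) u(1)] yz(5) by linarith
    then show ?thesis using step.IH by blast
  next
    case False then show ?thesis using step.IH u by blast
  qed
  then show ?case using yz zc by blast
qed

lemma upper:
  assumes hl: "has_linear_control (carrier G) dG m0" and mk: "m0 \<le> k"
  shows "\<exists>D. control_function (carrier W) dW k D \<and> weakly_dominates (\<lambda>t. ereal (2 powr t)) D"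
proof -
  obtain c0 where c0: "c0 > 0" "control_function (carrier G) dG m0 (\<lambda>r. ereal (c0 * r))"
    using hl by (auto simp: has_linear_control_def)
  define b where "b = card GG.A + 1"
  define L where "L = (real b + 2) * (2*c0+1) + c0 + 2"
  define D where "D = (\<lambda>r. ereal (2 powr (L * r + L)))"
  have b1: "b \<ge> 1" by (simp add: b_def)
  have L1: "L \<ge> 1" using c0 by (simp add: L_def)
  have "control_function (carrier W) dW k D"
    unfolding control_function_def
  proof (intro conjI allI impI)
    show "0 \<le> D t" for t by (simp add: D_def)
    fix r :: real assume r: "r > 0"
    note ex = c0(2)[unfolded control_function_def, THEN conjunct2, rule_format, OF r]
    obtain V where V: "\<forall>i\<le>m0. V i \<subseteq> carrier G" "(\<Union>i\<le>m0. V i) = carrier G"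
      "\<forall>x\<in>carrier G. \<exists>i\<le>m0. {y \<in> carrier G. dG x y < r} \<subseteq> V i"
      "\<forall>i\<le>m0. \<forall>x\<in>V i. diam_e dG (r_component (V i) dG r x) \<le> ereal (c0 * r)"
      using ex by (elim exE conjE) blast
    define U where "U = (\<lambda>i. if i \<le> m0 then {y \<in> carrier W. snd y \<in> V i} else {})"
    show "\<exists>U. (\<forall>i\<le>k. U i \<subseteq> carrier W) \<and> (\<Union>i\<le>k. U i) = carrier W \<and>
      (\<forall>x\<in>carrier W. \<exists>i\<le>k. {y \<in> carrier W. dW x y < r} \<subseteq> U i) \<and>
      (\<forall>i\<le>k. \<forall>x\<in>U i. diam_e dW (r_component (U i) dW r x) \<le> D r)"
    proof (intro exI[of _ U] conjI ballI allI impI)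
      show "U i \<subseteq> carrier W" for i by (auto simp: U_def)
      show "(\<Union>i\<le>k. U i) = carrier W"
      proof
        show "(\<Union>i\<le>k. U i) \<subseteq> carrier W" by (auto simp: U_def)
        show "carrier W \<subseteq> (\<Union>i\<le>k. U i)"
        proof
          fix w assume w: "w \<in> carrier W"
          then have "snd w \<in> carrier G" by (rule snd_carrier)
          then obtain i where "i \<le> m0" "snd w \<in> V i" using V(2) by blast
          then show "w \<in> (\<Union>i\<le>k. U i)" using w mk by (auto simp: U_def)
        qed
      qed
      show "\<exists>i\<le>k. {y \<in> carrier W. dW x y < r} \<subseteq> U i" if x: "x \<in> carrier W" for x
      proof -
        obtain i where i: "i \<le> m0" "{y \<in> carrier G. dG (snd x) y < r} \<subseteq> V i"
          using V(3) snd_carrier[OF x] by blast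
        have "{y \<in> carrier W. dW x y < r} \<subseteq> U i"
        proof
          fix y assume "y \<in> {y \<in> carrier W. dW x y < r}"
          then have y: "y \<in> carrier W" "dW x y < r" by auto
          then have "dG (snd x) (snd y) < r" using M1[OF x y(1)] by linarith
          then show "y \<in> U i" using i y snd_carrier[OF y(1)] by (auto simp: U_def)
        qed
        then show ?thesis using i mk by (intro exI[of _ i]) auto
      qed
      fix i w assume i: "i \<le> k" and wU: "w \<in> U i"
      have im: "i \<le> m0" and w: "w \<in> carrier W" "snd w \<in> V i" using wU by (auto simp: U_def split: if_splits)
      have Ui: "U i = {y \<in> carrier W. snd y \<in> V i}" using im by (simp add: U_def)
      define K where "K = r_component (V i) dG r (snd w)"
      have KV: "K \<subseteq> V i" unfolding K_def by (rule rc_sub[OF w(2)])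
      have KC: "K \<subseteq> carrier G" using KV V(1) im by blast
      have KD: "diam_e dG K \<le> ereal (c0 * r)" unfolding K_def using V(4) im w(2) by blast
      have Kd: "a \<in> K \<Longrightarrow> a' \<in> K \<Longrightarrow> dG a a' \<le> c0 * r" for a a'
        by (rule diam_le[OF _ _ KD])
      have cl: "y \<in> carrier W \<and> snd y \<in> K \<and> (\<forall>u\<in>carrier G. fst y u \<noteq> fst w u \<longrightarrow> (\<exists>g'\<in>K. dG g' u < r))"
        if "y \<in> r_component (U i) dW r w" for y
      proof -
        have "(r_step {y \<in> carrier W. snd y \<in> V i} dW r)\<^sup>*\<^sup>* w y" using that Ui by (simp add: r_component_def)
        from comp_claim[OF V(1)[rule_format, OF im] w this] show ?thesis unfolding K_def .
      qed
      define \<rho> where "\<rho> = (2*c0+1) * r"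
      define n where "n = nat \<lfloor>\<rho>\<rfloor>"
      show "diam_e dW (r_component (U i) dW r w) \<le> D r"
      proof (rule diam_bound)
        fix y z assume yz: "y \<in> r_component (U i) dW r w" "z \<in> r_component (U i) dW r w"
        note cy = cl[OF yz(1)] and cz = cl[OF yz(2)]
        have gyC: "snd y \<in> carrier G" using cy KC by blast
        define \<Delta> where "\<Delta> = {u \<in> carrier G. fst y u \<noteq> fst z u}"
        have dB: "dG (snd y) u \<le> \<rho>" if u: "u \<in> carrier G" "fst y u \<noteq> fst z u" for u
        proof -
          have "fst y u \<noteq> fst w u \<or> fst z u \<noteq> fst w u" using u by auto
          then obtain g' where g': "g' \<in> K" "dG g' u < r" using cy cz u by blast
          have swK: "snd w \<in> K" unfolding K_def by (rule rc_self)
          have "dG (snd y) u \<le> dG (snd y) (snd w) + dG (snd w) u"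
            using dG_tri gyC swK KC u by blast
          also have "\<dots> \<le> dG (snd y) (snd w) + (dG (snd w) g' + dG g' u)"
            using dG_tri swK g' KC u by (meson add_left_mono subsetD)
          also have "\<dots> \<le> c0 * r + (c0 * r + r)" using Kd cy swK g' by (smt (verit))
          finally show ?thesis by (simp add: \<rho>_def algebra_simps)
        qed
        have M4': "dW y z \<le> real (card \<Delta>) * (2 * \<rho> + 1) + dG (snd y) (snd z)"
          unfolding \<Delta>_def using M4[OF cy[THEN conjunct1] cz[THEN conjunct1] dB] by blast
        have dyz: "dG (snd y) (snd z) \<le> c0 * r" using Kd cy cz by blast
        have fin: "finite {v. GG.reach v \<and> GG.wl v \<le> n}" and cb: "card {v. GG.reach v \<and> GG.wl v \<le> n} \<le> b ^ n"
          using GG.ball_finite_card[OF S_fin, of n] by (auto simp: b_def)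
        have "card \<Delta> \<le> card {v. GG.reach v \<and> GG.wl v \<le> n}"
        proof (rule card_inj_on_le[where f = "\<lambda>u. inv\<^bsub>G\<^esub> snd y \<otimes>\<^bsub>G\<^esub> u"])
          show "inj_on (\<lambda>u. inv\<^bsub>G\<^esub> snd y \<otimes>\<^bsub>G\<^esub> u) \<Delta>" using gyC by (auto simp: inj_on_def \<Delta>_def)
          show "finite {v. GG.reach v \<and> GG.wl v \<le> n}" by (rule fin)
          show "(\<lambda>u. inv\<^bsub>G\<^esub> snd y \<otimes>\<^bsub>G\<^esub> u) ` \<Delta> \<subseteq> {v. GG.reach v \<and> GG.wl v \<le> n}"
          proof
            fix v assume "v \<in> (\<lambda>u. inv\<^bsub>G\<^esub> snd y \<otimes>\<^bsub>G\<^esub> u) ` \<Delta>"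
            then obtain u where u: "u \<in> carrier G" "fst y u \<noteq> fst z u" "v = inv\<^bsub>G\<^esub> snd y \<otimes>\<^bsub>G\<^esub> u"
              by (auto simp: \<Delta>_def)
            have "real (GG.wl v) \<le> \<rho>" using dB[OF u(1,2)] u(3) by (simp add: word_dist_def)
            then have "GG.wl v \<le> n" unfolding n_def by linarith
            moreover have "GG.reach v" using G_reach u gyC by simp
            ultimately show "v \<in> {v. GG.reach v \<and> GG.wl v \<le> n}" by simp
          qed
        qed
        then have "card \<Delta> \<le> b ^ n" using cb by linarith
        then have cD: "real (card \<Delta>) \<le> real b ^ n" by (metis of_nat_le_iff of_nat_power)
        have rho0: "\<rho> \<ge> 0" using c0 r by (simp add: \<rho>_def)
        have "dW y z \<le> real b ^ n * (2 * \<rho> + 1) + c0 * r"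
          using M4' dyz cD rho0 by (smt (verit) mult_right_mono)
        also have "\<dots> \<le> 2 powr (L * r + L)"
          using num_bound[OF c0(1) _ b1, of r] r unfolding L_def n_def \<rho>_def by (simp add: algebra_simps)
        finally show "ereal (dW y z) \<le> D r" by (simp add: D_def)
      qed
    qed
  qed
  moreover have "weakly_dominates (\<lambda>t. ereal (2 powr t)) D"
    unfolding weakly_dominates_def
  proof (intro exI[of _ L] conjI allI impI)
    show "1 \<le> L" by (rule L1)
    show "0 \<le> L" using L1 by simp
    fix t :: real assume "t \<ge> 0"
    have "2 powr (L * t + L) \<le> L * 2 powr (L * t + L) + L" using L1
      by (smt (verit) mult_le_cancel_right1 powr_gt_zero)
    then show "D t \<le> ereal L * ereal (2 powr (L * t + L)) + ereal L" by (simp add: D_def)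
  qed
  ultimately show ?thesis by blast
qed

end

lemma hex:
  fixes m p :: nat and U :: "nat \<Rightarrow> (nat \<Rightarrow> nat) set" and \<Gamma> :: "(nat \<Rightarrow> nat) set"
  assumes \<Gamma>_def: "\<Gamma> = {x. (\<forall>j<m. x j \<le> p) \<and> (\<forall>j\<ge>m. x j = 0)}"
  assumes p: "p > 0"
    and leb: "\<And>q. q \<in> \<Gamma> \<Longrightarrow> (\<forall>j<m. q j < p) \<Longrightarrow>
        \<exists>i<m. {y \<in> \<Gamma>. \<forall>j<m. q j \<le> y j \<and> y j \<le> q j + 1} \<subseteq> U i"
  shows "\<exists>i<m. \<exists>x y. x \<in> \<Gamma> \<and> y \<in> \<Gamma> \<and> x i = 0 \<and> y i = p \<and>
     (\<lambda>a b. a \<in> U i \<and> b \<in> U i \<and> a \<in> \<Gamma> \<and> b \<in> \<Gamma> \<and> (\<forall>j<m. a j \<le> b j + 1 \<and> b j \<le> a j + 1))\<^sup>+\<^sup>+ x y"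
proof (rule ccontr)
  assume nc: "\<not> ?thesis"
  define E where "E = (\<lambda>i a b. a \<in> U i \<and> b \<in> U i \<and> a \<in> \<Gamma> \<and> b \<in> \<Gamma> \<and> (\<forall>j<m. a j \<le> b j + 1 \<and> b j \<le> a j + 1))"
  define reach where "reach = (\<lambda>i z. \<exists>x\<in>\<Gamma>. x i = 0 \<and> (E i)\<^sup>*\<^sup>* x z)"
  define nz where "nz = (\<lambda>(x::nat \<Rightarrow> nat) j. if j < m then x j else 0)"
  define label where "label = (\<lambda>x i. if reach i (nz x) then 0 else (1::nat))"
  have nzG: "(\<forall>i<m. x i \<le> p) \<Longrightarrow> nz x \<in> \<Gamma>" for x by (simp add: nz_def \<Gamma>_def)
  have nc': "\<not> (E i)\<^sup>+\<^sup>+ x y" if "i < m" "x \<in> \<Gamma>" "y \<in> \<Gamma>" "x i = 0" "y i = p" for i x y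
    using nc that unfolding E_def by blast
  obtain q where q: "\<forall>i<m. q i < p"
    and qc: "\<forall>i<m. \<exists>r s. (\<forall>j<m. q j \<le> r j \<and> r j \<le> q j + 1) \<and> (\<forall>j<m. q j \<le> s j \<and> s j \<le> q j + 1) \<and> label r i \<noteq> label s i"
  proof (rule kuhn_lemma[OF p, of m label])
    show "\<forall>x. (\<forall>i<m. x i \<le> p) \<longrightarrow> (\<forall>i<m. label x i = 0 \<or> label x i = 1)" by (simp add: label_def)
    show "\<forall>x. (\<forall>i<m. x i \<le> p) \<longrightarrow> (\<forall>i<m. x i = 0 \<longrightarrow> label x i = 0)"
    proof (intro allI impI)
      fix x i assume x: "\<forall>i<m. x i \<le> p" "i < m" "x i = 0"
      have "reach i (nz x)" unfolding reach_def using nzG[OF x(1)] x by (intro bexI[of _ "nz x"]) (auto simp: nz_def)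
      then show "label x i = 0" by (simp add: label_def)
    qed
    show "\<forall>x. (\<forall>i<m. x i \<le> p) \<longrightarrow> (\<forall>i<m. x i = p \<longrightarrow> label x i = 1)"
    proof (intro allI impI)
      fix x i assume x: "\<forall>i<m. x i \<le> p" "i < m" "x i = p"
      have "\<not> reach i (nz x)"
      proof
        assume "reach i (nz x)"
        then obtain y where y: "y \<in> \<Gamma>" "y i = 0" "(E i)\<^sup>*\<^sup>* y (nz x)" by (auto simp: reach_def)
        have "y \<noteq> nz x" using y x p by (auto simp: nz_def)
        then have "(E i)\<^sup>+\<^sup>+ y (nz x)" using y(3) by (metis rtranclpD)
        moreover have "nz x i = p" using x by (simp add: nz_def)
        ultimately show False using nc'[OF x(2) y(1) nzG[OF x(1)] y(2)] by blast
      qed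
      then show "label x i = 1" by (simp add: label_def)
    qed
  qed
  define q' where "q' = nz q"
  have q'G: "q' \<in> \<Gamma>" unfolding q'_def using q by (intro nzG) (auto simp: less_imp_le)
  have q'p: "\<forall>j<m. q' j < p" using q by (simp add: q'_def nz_def)
  obtain c where c: "c < m" "{y \<in> \<Gamma>. \<forall>j<m. q' j \<le> y j \<and> y j \<le> q' j + 1} \<subseteq> U c"
    using leb[OF q'G q'p] by blast
  obtain r s where rs: "\<forall>j<m. q j \<le> r j \<and> r j \<le> q j + 1" "\<forall>j<m. q j \<le> s j \<and> s j \<le> q j + 1" "label r c \<noteq> label s c"
    using qc c(1) by blast
  have rG: "nz r \<in> \<Gamma>" using rs(1) q by (intro nzG) (metis Suc_eq_plus1 Suc_leI order_trans)
  have sG: "nz s \<in> \<Gamma>" using rs(2) q by (intro nzG) (metis Suc_eq_plus1 Suc_leI order_trans)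
  have rU: "nz r \<in> U c" using c(2) rG rs(1) by (auto simp: q'_def nz_def)
  have sU: "nz s \<in> U c" using c(2) sG rs(2) by (auto simp: q'_def nz_def)
  have adj: "\<forall>j<m. nz r j \<le> nz s j + 1 \<and> nz s j \<le> nz r j + 1" proof (intro allI impI)
    fix j assume "j < m"
    then have "q j \<le> r j" "r j \<le> q j + 1" "q j \<le> s j" "s j \<le> q j + 1" using rs(1,2) by auto
    then show "nz r j \<le> nz s j + 1 \<and> nz s j \<le> nz r j + 1" using \<open>j < m\<close> by (simp add: nz_def)
  qed
  have E1: "E c (nz r) (nz s)" using rG sG rU sU adj by (simp add: E_def)
  have E2: "E c (nz s) (nz r)" using rG sG rU sU adj by (auto simp: E_def)
  have "reach c (nz r) \<noteq> reach c (nz s)" using rs(3) by (auto simp: label_def split: if_splits)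
  moreover have "reach c (nz r) \<Longrightarrow> reach c (nz s)" using E1 unfolding reach_def
    by (meson rtranclp.rtrancl_into_rtrancl)
  moreover have "reach c (nz s) \<Longrightarrow> reach c (nz r)" using E2 unfolding reach_def
    by (meson rtranclp.rtrancl_into_rtrancl)
  ultimately show False by blast
qed

lemma diam_ge: "x \<in> C \<Longrightarrow> y \<in> C \<Longrightarrow> ereal (d x y) \<le> diam_e d C"
  unfolding diam_e_def by (intro Sup_upper) blast

context wrS
begin

definition cfg :: "(nat \<times> nat \<Rightarrow> 'g) \<Rightarrow> 'h \<Rightarrow> nat \<Rightarrow> (nat \<Rightarrow> nat) \<Rightarrow> ('g \<Rightarrow> 'h) \<times> 'g" where
  "cfg pos h m x = ((\<lambda>y\<in>carrier G. if \<exists>j<m. \<exists>l<x j. y = pos (j, l) then h else \<one>\<^bsub>H\<^esub>), \<one>\<^bsub>G\<^esub>)"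

lemma cfg_carrier:
  assumes h: "h \<in> carrier H" and pc: "\<And>j l. j < m \<Longrightarrow> l < p \<Longrightarrow> pos (j, l) \<in> carrier G"
    and x: "\<forall>j<m. x j \<le> p"
  shows "cfg pos h m x \<in> carrier W"
proof -
  have "supp (fst (cfg pos h m x)) \<subseteq> pos ` ({..<m} \<times> {..<p})"
    using x by (auto simp: supp_def cfg_def split: if_splits)
  then have "finite (supp (fst (cfg pos h m x)))" by (rule finite_subset) auto
  then show ?thesis using h by (auto simp: cfg_def carrier_W)
qed


lemma lower:
  assumes h: "h \<in> carrier H" "h \<noteq> \<one>\<^bsub>H\<^esub>"
    and eg: "weakly_dominates (growth G S) (\<lambda>t. ereal (2 powr t))"
    and cf: "control_function (carrier W) dW k D"
  shows "weakly_dominates D (\<lambda>t. ereal (2 powr t))"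
proof -
  obtain la C where la: "la \<ge> 1" "C \<ge> 0"
    and gb': "\<forall>t\<ge>0. ereal (2 powr t) \<le> ereal la * growth G S (la * t + C) + ereal C"
    using eg unfolding weakly_dominates_def by (elim exE conjE) simp
  have gb: "ereal (2 powr t) \<le> ereal la * growth G S (la * t + C) + ereal C" if "t \<ge> 0" for t
    using gb' that by simp
  define m where "m = Suc k"
  have m1: "real m \<ge> 1" by (simp add: m_def)
  define Lm where "Lm = 2 * real m * la"
  define C' where "C' = real m * (2 * C + 1) + 1 + (la * real m + C)"
  have "1 * 1 \<le> real m * la" using la m1 by (intro mult_mono) auto
  then have Lm1: "Lm \<ge> 1" unfolding Lm_def by simp
  have mC0: "real m * (2 * C + 1) \<ge> 0" "la * real m \<ge> 0" using la by simp_all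
  then have C'1: "C' \<ge> 1" unfolding C'_def using la by linarith
  have C'2: "la * real m + C \<le> C'" unfolding C'_def using mC0 by linarith
  have C'0: "C' \<ge> 0" using C'1 by simp
  have main: "ereal (2 powr t) \<le> ereal Lm * D (Lm * t + C') + ereal C'" if t: "t \<ge> 0" for t
  proof -
    define r where "r = Lm * t + C'"
    define R where "R = la * t + C + (la * real m + C) / (2 * real m)"
    have rR: "r = real m * (2 * R + 1) + 1" using m1 unfolding r_def R_def Lm_def C'_def
      by (simp add: field_simps)
    have "0 \<le> Lm * t" using Lm1 t by simp
    then have r0: "r > 0" using C'1 unfolding r_def by linarith
    have Dr0: "D r \<ge> 0" using cf r0 unfolding control_function_def by simp
    define BR where "BR = {g \<in> carrier G. real (GG.wl g) < R}"
    define N where "N = card {g \<in> carrier G. real (GG.wl g) < la * t + C}"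
    have finB: "finite BR"
    proof -
      have "BR \<subseteq> {g. GG.reach g \<and> GG.wl g \<le> nat \<lceil>R\<rceil>}" unfolding BR_def using G_reach by (auto; linarith)
      then show ?thesis using GG.ball_finite_card[OF S_fin] finite_subset by blast
    qed
    have NB: "N \<le> card BR" unfolding N_def
    proof (rule card_mono[OF finB])
      have "la * t + C \<le> R" unfolding R_def using la m1 by (simp add: field_simps)
      then show "{g \<in> carrier G. real (GG.wl g) < la * t + C} \<subseteq> BR" unfolding BR_def by auto
    qed
    have tN: "2 powr t \<le> la * real N + C"
      using gb[OF t] unfolding growth_def N_def by simp
    define p where "p = card BR div m"
    have mp: "m * p \<le> card BR" unfolding p_def by simp
    have Bp: "card BR < m * (p + 1)" unfolding p_def using m1
      by (metis add.commute div_mult_mod_eq mod_less_divisor mult.commute mult_Suc_right nat_add_left_cancel_less of_nat_1 of_nat_le_iff plus_1_eq_Suc zero_less_Suc m_def)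
    have Dp: "ereal (real p) \<le> D r" if p0: "p > 0"
    proof -
      obtain pos where pos: "pos ` ({..<m} \<times> {..<p}) \<subseteq> BR" "inj_on pos ({..<m} \<times> {..<p})"
        using card_le_inj[of "{..<m} \<times> {..<p}" BR] finB mp by (auto simp: card_cartesian_product)
      have pc: "pos (j, l) \<in> carrier G" if "j < m" "l < p" for j l using pos(1) that unfolding BR_def by blast
      have pR: "real (GG.wl (pos (j, l))) < R" if "j < m" "l < p" for j l using pos(1) that unfolding BR_def by blast
      define \<Gamma> where "\<Gamma> = {x :: nat \<Rightarrow> nat. (\<forall>j<m. x j \<le> p) \<and> (\<forall>j\<ge>m. x j = 0)}"
      let ?c = "cfg pos h m"
      have cc: "x \<in> \<Gamma> \<Longrightarrow> ?c x \<in> carrier W" for x using cfg_carrier[of h m p pos, OF h(1) pc] unfolding \<Gamma>_def by blast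
      have fstc: "fst (?c x) u = (if \<exists>j<m. \<exists>l<x j. u = pos (j, l) then h else \<one>\<^bsub>H\<^esub>)" if "u \<in> carrier G" for x u
        using that by (simp add: cfg_def)
      have sndc: "snd (?c x) = \<one>\<^bsub>G\<^esub>" for x by (simp add: cfg_def)
      have KD: "dW (?c x) (?c y) < r" if xy: "x \<in> \<Gamma>" "y \<in> \<Gamma>" "\<forall>j<m. x j \<le> y j + 1 \<and> y j \<le> x j + 1" for x y
      proof -
        define \<Delta> where "\<Delta> = {u \<in> carrier G. fst (?c x) u \<noteq> fst (?c y) u}"
        have sub: "\<Delta> \<subseteq> (\<lambda>j. pos (j, min (x j) (y j))) ` {..<m}"
        proof
          fix u assume u: "u \<in> \<Delta>"
          then have uc: "u \<in> carrier G" and une: "fst (?c x) u \<noteq> fst (?c y) u" unfolding \<Delta>_def by auto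
          have ne: "(\<exists>j<m. \<exists>l<x j. u = pos (j, l)) \<noteq> (\<exists>j<m. \<exists>l<y j. u = pos (j, l))"
            using une unfolding fstc[OF uc] by metis
          have xp: "\<forall>j<m. x j \<le> p" "\<forall>j<m. y j \<le> p" using xy unfolding \<Gamma>_def by auto
          show "u \<in> (\<lambda>j. pos (j, min (x j) (y j))) ` {..<m}"
          proof (cases "\<exists>j<m. \<exists>l<x j. u = pos (j, l)")
            case True
            then obtain j l where jl: "j < m" "l < x j" "u = pos (j, l)" by blast
            have "\<not> l < y j" using ne True jl by blast
            then have "l = min (x j) (y j)" using jl xy(3) by fastforce
            then show ?thesis using jl by blast
          next
            case False
            then obtain j l where jl: "j < m" "l < y j" "u = pos (j, l)" using ne by blast
            have "\<not> l < x j" using ne False jl by blast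
            then have "l = min (x j) (y j)" using jl xy(3) by fastforce
            then show ?thesis using jl by blast
          qed
        qed
        have "card \<Delta> \<le> card ((\<lambda>j. pos (j, min (x j) (y j))) ` {..<m})" by (rule card_mono[OF _ sub]) simp
        also have "\<dots> \<le> card {..<m}" by (rule card_image_le) simp
        finally have cD: "card \<Delta> \<le> m" by simp
        have Bd: "dG (snd (?c x)) u \<le> R" if "u \<in> carrier G" "fst (?c x) u \<noteq> fst (?c y) u" for u
        proof -
          have ne: "(\<exists>j<m. \<exists>l<x j. u = pos (j, l)) \<noteq> (\<exists>j<m. \<exists>l<y j. u = pos (j, l))"
            using that(2) unfolding fstc[OF that(1)] by metis
          then obtain j l where jl: "j < m" "l < x j \<or> l < y j" "u = pos (j, l)" by blast
          have "x j \<le> p" "y j \<le> p" using jl(1) xy(1,2) unfolding \<Gamma>_def by auto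
          then have lt: "l < p" using jl(2) by linarith
          have "dG (snd (?c x)) u = real (GG.wl u)" by (simp add: sndc word_dist_def that(1))
          then show ?thesis using pR[OF jl(1) lt] jl by simp
        qed
        have "dW (?c x) (?c y) \<le> real (card \<Delta>) * (2 * R + 1) + dG (snd (?c x)) (snd (?c y))"
          unfolding \<Delta>_def by (rule M4[OF cc[OF xy(1)] cc[OF xy(2)] Bd])
        also have "dG (snd (?c x)) (snd (?c y)) = 0" by (simp add: sndc word_dist_def GG.wl_one)
        also have "R \<ge> 0" using la t m1 unfolding R_def by (simp add: field_simps)
        then have "real (card \<Delta>) * (2 * R + 1) \<le> real m * (2 * R + 1)" using cD by (intro mult_right_mono) auto
        finally show ?thesis using rR by linarith
      qed
      obtain U where U: "\<forall>i\<le>k. U i \<subseteq> carrier W" "(\<Union>i\<le>k. U i) = carrier W"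
        "\<forall>x\<in>carrier W. \<exists>i\<le>k. {y \<in> carrier W. dW x y < r} \<subseteq> U i"
        "\<forall>i\<le>k. \<forall>x\<in>U i. diam_e dW (r_component (U i) dW r x) \<le> D r"
        using cf[unfolded control_function_def, THEN conjunct2, rule_format, OF r0] by (elim exE conjE) blast
      define U' where "U' = (\<lambda>i. {x \<in> \<Gamma>. ?c x \<in> U i})"
      have "\<exists>i<m. \<exists>x y. x \<in> \<Gamma> \<and> y \<in> \<Gamma> \<and> x i = 0 \<and> y i = p \<and>
        (\<lambda>a b. a \<in> U' i \<and> b \<in> U' i \<and> a \<in> \<Gamma> \<and> b \<in> \<Gamma> \<and> (\<forall>j<m. a j \<le> b j + 1 \<and> b j \<le> a j + 1))\<^sup>+\<^sup>+ x y"
      proof (rule hex[OF \<Gamma>_def p0])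
        fix q assume q: "q \<in> \<Gamma>" "\<forall>j<m. q j < p"
        obtain i where i: "i \<le> k" "{y \<in> carrier W. dW (?c q) y < r} \<subseteq> U i" using U(3) cc[OF q(1)] by blast
        have "{y \<in> \<Gamma>. \<forall>j<m. q j \<le> y j \<and> y j \<le> q j + 1} \<subseteq> U' i"
        proof
          fix y assume y: "y \<in> {y \<in> \<Gamma>. \<forall>j<m. q j \<le> y j \<and> y j \<le> q j + 1}"
          then have "\<forall>j<m. q j \<le> y j + 1 \<and> y j \<le> q j + 1" by auto
          then have "dW (?c q) (?c y) < r" using KD[OF q(1)] y by blast
          then show "y \<in> U' i" using i y cc[of y] unfolding U'_def by blast
        qed
        then show "\<exists>i<m. {y \<in> \<Gamma>. \<forall>j<m. q j \<le> y j \<and> y j \<le> q j + 1} \<subseteq> U' i" using i m_def by (intro exI[of _ i]) auto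
      qed
      then obtain i x y where ixy: "i < m" "x \<in> \<Gamma>" "y \<in> \<Gamma>" "x i = 0" "y i = p"
        and tr: "(\<lambda>a b. a \<in> U' i \<and> b \<in> U' i \<and> a \<in> \<Gamma> \<and> b \<in> \<Gamma> \<and> (\<forall>j<m. a j \<le> b j + 1 \<and> b j \<le> a j + 1))\<^sup>+\<^sup>+ x y"
        by blast
      let ?E = "\<lambda>a b. a \<in> U' i \<and> b \<in> U' i \<and> a \<in> \<Gamma> \<and> b \<in> \<Gamma> \<and> (\<forall>j<m. a j \<le> b j + 1 \<and> b j \<le> a j + 1)"
      have ik: "i \<le> k" using ixy m_def by simp
      have xU: "?c x \<in> U i" using tranclpD[OF tr] unfolding U'_def by blast
      have st: "(r_step (U i) dW r)\<^sup>*\<^sup>* (?c a) (?c b)" if "?E\<^sup>*\<^sup>* a b" for a b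
        using that
      proof (induction rule: rtranclp_induct)
        case base then show ?case by simp
      next
        case (step b c)
        have "r_step (U i) dW r (?c b) (?c c)" using step.hyps(2) KD unfolding r_step_def U'_def by blast
        with step.IH show ?case by (rule rtranclp.rtrancl_into_rtrancl)
      qed
      have yC: "?c y \<in> r_component (U i) dW r (?c x)"
        using st[OF tranclp_into_rtranclp[OF tr]] by (simp add: r_component_def)
      have "ereal (dW (?c x) (?c y)) \<le> diam_e dW (r_component (U i) dW r (?c x))"
        by (rule diam_ge[OF rc_self yC])
      also have "\<dots> \<le> D r" using U(4) ik xU by blast
      finally have dD: "ereal (dW (?c x) (?c y)) \<le> D r" .
      have "pos ` ({i} \<times> {..<p}) \<subseteq> {u \<in> carrier G. fst (?c x) u \<noteq> fst (?c y) u}"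
      proof
        fix u assume "u \<in> pos ` ({i} \<times> {..<p})"
        then obtain l where l: "l < p" "u = pos (i, l)" by blast
        have uc: "u \<in> carrier G" using pc ixy(1) l by blast
        have "\<not> (\<exists>j<m. \<exists>l'<x j. u = pos (j, l'))"
        proof
          assume "\<exists>j<m. \<exists>l'<x j. u = pos (j, l')"
          then obtain j l' where jl: "j < m" "l' < x j" "u = pos (j, l')" by blast
          have "x j \<le> p" using jl(1) ixy(2) unfolding \<Gamma>_def by auto
          then have "l' < p" using jl(2) by linarith
          then have "(j, l') = (i, l)" using pos(2) jl l ixy(1) unfolding inj_on_def by blast
          then show False using jl ixy(4) by simp
        qed
        moreover have "\<exists>j<m. \<exists>l'<y j. u = pos (j, l')" using ixy(1,5) l by blast
        ultimately show "u \<in> {u \<in> carrier G. fst (?c x) u \<noteq> fst (?c y) u}"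
          using uc fstc[OF uc] h(2) by simp
      qed
      moreover have "inj_on pos ({i} \<times> {..<p})" by (rule inj_on_subset[OF pos(2)]) (use ixy(1) in auto)
      ultimately have "p \<le> card {u \<in> carrier G. fst (?c x) u \<noteq> fst (?c y) u}"
      proof -
        assume a: "pos ` ({i} \<times> {..<p}) \<subseteq> {u \<in> carrier G. fst (?c x) u \<noteq> fst (?c y) u}" "inj_on pos ({i} \<times> {..<p})"
        have "finite {u \<in> carrier G. fst (?c x) u \<noteq> fst (?c y) u}"
        proof (rule finite_subset)
          show "{u \<in> carrier G. fst (?c x) u \<noteq> fst (?c y) u} \<subseteq> supp (fst (?c x)) \<union> supp (fst (?c y))"
            by (auto simp: supp_def)
          show "finite (supp (fst (?c x)) \<union> supp (fst (?c y)))" using supp_fin cc ixy by blast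
        qed
        then have "card (pos ` ({i} \<times> {..<p})) \<le> card {u \<in> carrier G. fst (?c x) u \<noteq> fst (?c y) u}"
          using a(1) by (rule card_mono)
        moreover have "card (pos ` ({i} \<times> {..<p})) = p" using card_image[OF a(2)] by (simp add: card_cartesian_product)
        ultimately show ?thesis by simp
      qed
      then have "real p \<le> dW (?c x) (?c y)" using M3[OF cc[OF ixy(2)] cc[OF ixy(3)]] by linarith
      then show ?thesis using dD by (meson ereal_less_eq(3) order_trans)
    qed
    show ?thesis
    proof (cases "p = 0")
      case True
      then have "card BR < m" using Bp by simp
      then have "2 powr t \<le> la * real m + C" using tN NB la
        by (smt (verit) mult_left_mono of_nat_le_iff less_imp_le_nat)
      then have "2 powr t \<le> C'" using C'2 by linarith
      moreover have "0 \<le> ereal Lm * D r" using Dr0 Lm1 by simp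
      ultimately show ?thesis unfolding r_def[symmetric] by (metis add_increasing ereal_less_eq(3))
    next
      case False
      have "2 powr t \<le> la * (real m * (real p + 1)) + C" using tN NB la Bp
        by (smt (verit) mult_left_mono of_nat_le_iff of_nat_mult of_nat_add of_nat_1 less_imp_le_nat le_trans)
      also have "\<dots> \<le> Lm * real p + C'" unfolding Lm_def C'_def using la m1 by (simp add: algebra_simps)
      finally have a: "ereal (2 powr t) \<le> ereal (Lm * real p) + ereal C'" by simp
      have "ereal (Lm * real p) = ereal Lm * ereal (real p)" by simp
      also have "\<dots> \<le> ereal Lm * D r" using Dp False Lm1 by (intro ereal_mult_left_mono) auto
      finally have "ereal (Lm * real p) + ereal C' \<le> ereal Lm * D r + ereal C'" by (rule add_right_mono)
      then show ?thesis using a unfolding r_def by (rule order_trans[rotated])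
    qed
  qed
  show ?thesis unfolding weakly_dominates_def
    using Lm1 C'0 main by (intro exI[of _ Lm] exI[of _ C']) auto
qed

end

theorem corollary4p6:
  fixes G :: "'g monoid" and H :: "'h monoid" and S :: "'g set" and n :: nat
  assumes "group G" and "finite S" and "S \<subseteq> carrier G" and "generate G S = carrier G"
    and "exp_growth G S"
    and "group H" and "finite (carrier H)" and "carrier H \<noteq> {\<one>\<^bsub>H\<^esub>}"
    and "dim_AN (carrier G) (word_dist G S) \<le> enat n"
  shows "\<forall>k\<ge>n.
     (\<exists>D. control_function (carrier (wreath H G)) (word_dist (wreath H G) (wreath_gens H G S)) k D
          \<and> weakly_dominates (\<lambda>t. ereal (2 powr t)) D)
   \<and> (\<forall>D. control_function (carrier (wreath H G)) (word_dist (wreath H G) (wreath_gens H G S)) k D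
          \<longrightarrow> weakly_dominates D (\<lambda>t. ereal (2 powr t)))"
proof -
  interpret wrS G H S
    by (rule wrS.intro, rule wr.intro, fact, fact) (unfold_locales, fact+)
  have ex: "\<exists>m. has_linear_control (carrier G) (word_dist G S) m"
  proof (rule ccontr)
    assume "\<not> ?thesis"
    then have "dim_AN (carrier G) (word_dist G S) = \<infinity>" by (simp add: dim_AN_def)
    then show False using assms(9) by simp
  qed
  define m0 where "m0 = (LEAST m. has_linear_control (carrier G) (word_dist G S) m)"
  have hl: "has_linear_control (carrier G) (word_dist G S) m0" unfolding m0_def by (rule LeastI_ex[OF ex])
  have "enat m0 \<le> enat n" using assms(9) ex by (simp add: dim_AN_def m0_def)
  then have m0n: "m0 \<le> n" by simp
  obtain h where h: "h \<in> carrier H" "h \<noteq> \<one>\<^bsub>H\<^esub>" using assms(8) H.one_closed by blast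
  have eg: "weakly_dominates (growth G S) (\<lambda>t. ereal (2 powr t))"
    using assms(5) by (simp add: exp_growth_def weakly_equivalent_def)
  have u: "\<exists>D. control_function (carrier W) dW k D \<and> weakly_dominates (\<lambda>t. ereal (2 powr t)) D"
    if "n \<le> k" for k
    by (rule upper[OF hl le_trans[OF m0n that]])
  have l: "\<forall>D. control_function (carrier W) dW k D \<longrightarrow> weakly_dominates D (\<lambda>t. ereal (2 powr t))" for k
    using lower[OF h eg] by blast
  show ?thesis using u l by blast
qed

end
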